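(* Let $d=d_1+\dots+d_l$ and let $f:\mathbb{R}^d\to\mathbb{R}$ be differentiable with $f(x)\ge f^{\inf}$ for all $x$ (some $f^{\inf}\in\mathbb{R}$), and $f(x)\le f(y)+\langle\nabla f(y),x-y\rangle+\tfrac12\langle {\bf L}(x-y),x-y\rangle$ for all $x,y$, where ${\bf L}=\mathrm{Diag}({\bf L}_1,\dots,{\bf L}_l)$ with ${\bf L}_i\in\mathbb{S}^{d_i}_{++}$. For each $i\in[l]$ let $({\bf S}_i^k)_{k\ge0}$ be i.i.d. random matrices in $\mathbb{S}^{d_i}_+$ with $\mathbb{E}[{\bf S}_i^k]={\bf I}_{d_i}$, and set ${\bf S}^k:=\mathrm{Diag}({\bf S}_1^k,\dots,{\bf S}_l^k)$. Choose ${\bf W}_i\in\mathbb{S}^{d_i}_{++}$ and scalars $\gamma_i>0$ such that $$\gamma_i\le \lambda_{\max}^{-1}\Big(\mathbb{E}\big[{\bf W}_i^{-1/2}{\bf S}_i^k{\bf W}_i{\bf L}_i{\bf W}_i{\bf S}_i^k{\bf W}_i^{-1/2}\big]\Big)\qquad\forall i\in[l].$$ Let ${\bf W}:=\mathrm{Diag}({\bf W}_1,\dots,{\bf W}_l)$, $\Gamma:=\mathrm{Diag}(\gamma_1{\bf I}_{d_1},\dots,\gamma_l{\bf I}_{d_l})$, ${\bf D}:=\Gamma{\bf W}$, fix $x^0\in\mathbb{R}^d$ and let $x^{k+1}=x^k-{\bf D}{\bf S}^k\nabla f(x^k)$. Then for every $K\ge1$, $$\frac1K\sum_{k=0}^{K-1}\mathbb{E}\Big[\|\nabla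 f(x^k)\|^2_{\Gamma{\bf W}/\det(\Gamma{\bf W})^{1/d}}\Big]\le\frac{2(f(x^0)-f^{\inf})}{\det(\Gamma{\bf W})^{1/d}\,K}.$$
   Context: $\mathbb{S}^m_{+}$ (resp. $\mathbb{S}^m_{++}$): symmetric positive semidefinite (resp. definite) $m\times m$ matrices. $\mathrm{Diag}({\bf A}_1,\dots,{\bf A}_l)$ is the block-diagonal matrix with blocks ${\bf A}_i$. $\|x\|_{{\bf Q}}^2:=\langle{\bf Q}x,x\rangle$. $\lambda_{\max}$ denotes the largest eigenvalue. All expectations are assumed finite. *)

theory Defs
  imports "HOL-Probability.Probability"
begin

text \<open>Block structure: the coordinates 'n of R^d are partitioned into blocks
  indexed by 'b via blk :: 'n => 'b (block i = {j. blk j = i}, of size d_i).\<close>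

definition block_diag :: "('n::finite \<Rightarrow> 'b) \<Rightarrow> real^'n^'n \<Rightarrow> bool" where
  "block_diag blk A \<longleftrightarrow> (\<forall>i j. blk i \<noteq> blk j \<longrightarrow> A $ i $ j = 0)"

definition sym_mat :: "real^'n^'n \<Rightarrow> bool" where
  "sym_mat A \<longleftrightarrow> transpose A = A"

text \<open>vectors supported on block b (i.e. the copy of R^{d_b} inside R^d)\<close>
definition block_vec :: "('n::finite \<Rightarrow> 'b) \<Rightarrow> 'b \<Rightarrow> real^'n \<Rightarrow> bool" where
  "block_vec blk b v \<longleftrightarrow> (\<forall>i. blk i \<noteq> b \<longrightarrow> v $ i = 0)"

definition block_pd :: "('n::finite \<Rightarrow> 'b) \<Rightarrow> 'b \<Rightarrow> real^'n^'n \<Rightarrow> bool" where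
  "block_pd blk b A \<longleftrightarrow> (\<forall>v. block_vec blk b v \<and> v \<noteq> 0 \<longrightarrow> v \<bullet> (A *v v) > 0)"

definition block_psd :: "('n::finite \<Rightarrow> 'b) \<Rightarrow> 'b \<Rightarrow> real^'n^'n \<Rightarrow> bool" where
  "block_psd blk b A \<longleftrightarrow> (\<forall>v. block_vec blk b v \<longrightarrow> v \<bullet> (A *v v) \<ge> 0)"

definition psd_mat :: "real^'n^'n \<Rightarrow> bool" where
  "psd_mat A \<longleftrightarrow> (\<forall>v. v \<bullet> (A *v v) \<ge> 0)"

definition block_lambda_max :: "('n::finite \<Rightarrow> 'b) \<Rightarrow> 'b \<Rightarrow> real^'n^'n \<Rightarrow> real" where
  "block_lambda_max blk b A =
     Max {c. \<exists>v. block_vec blk b v \<and> v \<noteq> 0 \<and> A *v v = c *\<^sub>R v}"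

definition psd_sqrt :: "real^'n^'n \<Rightarrow> real^'n^'n" where
  "psd_sqrt A = (THE R. sym_mat R \<and> psd_mat R \<and> R ** R = A)"

definition block_scal :: "('n::finite \<Rightarrow> 'b) \<Rightarrow> ('b \<Rightarrow> real) \<Rightarrow> real^'n^'n" where
  "block_scal blk \<gamma> = (\<chi> i j. if i = j then \<gamma> (blk i) else 0)"

definition qnorm_sq :: "real^'n^'n \<Rightarrow> real^'n \<Rightarrow> real" where
  "qnorm_sq Q x = (Q *v x) \<bullet> x"

end

theory Submission
  imports Defs "HOL-Analysis.Analysis"
begin

lemma sym_inner:
  fixes A :: "real^'n^'n"
  assumes "sym_mat A"
  shows "(A *v x) \<bullet> y = x \<bullet> (A *v y)"
proof -
  have "x \<bullet> (A *v y) = (x v* A) \<bullet> y" by (simp add: dot_lmul_matrix)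
  also have "x v* A = transpose A *v x" by simp
  also have "transpose A = A" using assms by (simp add: sym_mat_def)
  finally show ?thesis by simp
qed

lemma quad_zero:
  fixes a b :: real
  assumes "\<And>t. 2*t*a + t^2*b \<le> 0"
  shows "a = 0"
proof (rule ccontr)
  assume "a \<noteq> 0"
  define c where "c = \<bar>b\<bar> + 1"
  have c: "c > 0" "\<bar>b\<bar> \<le> c" unfolding c_def by auto
  define t where "t = a / (4*c)"
  have "t^2 * b \<ge> - (t^2 * c)"
  proof -
    have "-c \<le> b" using c by linarith
    then have "t^2 * (-c) \<le> t^2 * b" by (rule mult_left_mono) simp
    then show ?thesis by simp
  qed
  moreover have "2*t*a = a^2/(2*c)" unfolding t_def power2_eq_square using c by (simp add: field_simps)
  moreover have "t^2 * c = a^2/(16*c)" unfolding t_def power2_eq_square using c by (simp add: field_simps)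
  moreover have "a^2/(16*c) < a^2/(2*c)" using c \<open>a \<noteq> 0\<close>
    by (simp add: divide_strict_left_mono)
  ultimately have "2*t*a + t^2*b > 0" by linarith
  with assms[of t] show False by simp
qed

lemma rayleigh_eig:
  fixes A :: "real^'n^'n"
  assumes symA: "sym_mat A" and U: "subspace U" and inv: "\<forall>u\<in>U. A *v u \<in> U" and ne: "U \<noteq> {0}"
  shows "\<exists>v\<in>U. norm v = 1 \<and> A *v v = (v \<bullet> (A *v v)) *\<^sub>R v"
proof -
  define K where "K = U \<inter> sphere 0 1"
  have "compact K" unfolding K_def
    by (metis Int_commute compact_Int_closed compact_sphere closed_subspace U)
  obtain u where u: "u \<in> U" "u \<noteq> 0" using ne U subspace_0 by blast
  have "u /\<^sub>R norm u \<in> K" unfolding K_def using u U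
    by (simp add: subspace_scale)
  then have "K \<noteq> {}" by blast
  have "continuous_on K (\<lambda>w. w \<bullet> (A *v w))"
    by (intro continuous_intros continuous_on_compose2[OF matrix_vector_mult_linear_continuous_on[of UNIV A]]) auto
  then obtain v where v: "v \<in> K" and vmax: "\<And>y. y \<in> K \<Longrightarrow> y \<bullet> (A *v y) \<le> v \<bullet> (A *v v)"
    using continuous_attains_sup[OF \<open>compact K\<close> \<open>K \<noteq> {}\<close>] by blast
  define \<mu> where "\<mu> = v \<bullet> (A *v v)"
  have vU: "v \<in> U" and nv: "norm v = 1" using v unfolding K_def by auto
  have vv: "v \<bullet> v = 1" using nv by (simp add: norm_eq_1)
  have bound: "y \<bullet> (A *v y) \<le> \<mu> * (y \<bullet> y)" if "y \<in> U" for y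
  proof (cases "y = 0")
    case True then show ?thesis by simp
  next
    case False
    have "y /\<^sub>R norm y \<in> K" unfolding K_def using that False U by (simp add: subspace_scale)
    then have "(y /\<^sub>R norm y) \<bullet> (A *v (y /\<^sub>R norm y)) \<le> \<mu>" using vmax \<mu>_def by blast
    then have "(y \<bullet> (A *v y)) / (norm y)^2 \<le> \<mu>"
      by (simp add: matrix_vector_mult_scaleR power2_eq_square divide_inverse mult.commute mult.left_commute)
    then have "y \<bullet> (A *v y) \<le> \<mu> * (norm y)^2" using False by (simp add: divide_le_eq)
    then show ?thesis by (simp add: power2_norm_eq_inner)
  qed
  define w where "w = A *v v - \<mu> *\<^sub>R v"
  have wU: "w \<in> U" unfolding w_def using inv vU U by (simp add: subspace_diff subspace_scale)
  have "\<And>t. 2*t*(w \<bullet> (A *v v) - \<mu> * (v \<bullet> w)) + t^2*(w \<bullet> (A *v w) - \<mu> * (w \<bullet> w)) \<le> 0"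
  proof -
    fix t :: real
    have "v + t *\<^sub>R w \<in> U" using vU wU U by (simp add: subspace_add subspace_scale)
    note b = bound[OF this]
    have e1: "(v + t *\<^sub>R w) \<bullet> (A *v (v + t *\<^sub>R w)) = \<mu> + 2*t*(w \<bullet> (A *v v)) + t^2 * (w \<bullet> (A *v w))"
    proof -
      have "v \<bullet> (A *v w) = w \<bullet> (A *v v)" using sym_inner[OF symA, of w v] by (simp add: inner_commute)
      then show ?thesis unfolding \<mu>_def
        by (simp add: matrix_vector_right_distrib matrix_vector_mult_scaleR inner_add_left inner_add_right power2_eq_square algebra_simps)
    qed
    have e2: "(v + t *\<^sub>R w) \<bullet> (v + t *\<^sub>R w) = 1 + 2*t*(v \<bullet> w) + t^2*(w \<bullet> w)"
      using vv by (simp add: inner_add_left inner_add_right power2_eq_square algebra_simps inner_commute)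
    have "\<mu> + 2*t*(w \<bullet> (A *v v)) + t^2 * (w \<bullet> (A *v w)) \<le> \<mu> * (1 + 2*t*(v \<bullet> w) + t^2*(w \<bullet> w))"
      using b unfolding e1 e2 .
    moreover have "2*t*(w \<bullet> (A *v v) - \<mu> * (v \<bullet> w)) + t^2*(w \<bullet> (A *v w) - \<mu> * (w \<bullet> w))
       = (\<mu> + 2*t*(w \<bullet> (A *v v)) + t^2 * (w \<bullet> (A *v w))) - \<mu> * (1 + 2*t*(v \<bullet> w) + t^2*(w \<bullet> w))"
      by (simp add: algebra_simps)
    ultimately show "2*t*(w \<bullet> (A *v v) - \<mu> * (v \<bullet> w)) + t^2*(w \<bullet> (A *v w) - \<mu> * (w \<bullet> w)) \<le> 0"
      by linarith
  qed
  from quad_zero[OF this] have "w \<bullet> (A *v v) - \<mu> * (v \<bullet> w) = 0" .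
  then have "w \<bullet> w = 0" unfolding w_def
    by (simp add: inner_diff_left inner_diff_right inner_commute vv algebra_simps)
  then have "w = 0" by simp
  then show ?thesis using vU nv unfolding w_def \<mu>_def by auto
qed


lemma spectral_subspace:
  fixes A :: "real^'n^'n"
  assumes symA: "sym_mat A"
  shows "subspace U \<Longrightarrow> (\<forall>u\<in>U. A *v u \<in> U) \<Longrightarrow>
    \<exists>B. finite B \<and> B \<subseteq> U \<and> pairwise orthogonal B \<and>
        (\<forall>v\<in>B. norm v = 1 \<and> A *v v = (v \<bullet> (A *v v)) *\<^sub>R v) \<and> span B = U"
proof (induction "dim U" arbitrary: U rule: less_induct)
  case (less U)
  show ?case
  proof (cases "U = {0}")
    case True
    then show ?thesis by (intro exI[of _ "{}"]) auto
  next
    case False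
    obtain v where vU: "v \<in> U" and nv: "norm v = 1" and ev: "A *v v = (v \<bullet> (A *v v)) *\<^sub>R v"
      using rayleigh_eig[OF symA less.prems False] by blast
    have vv: "v \<bullet> v = 1" using nv by (simp add: norm_eq_1)
    define U' where "U' = {w\<in>U. v \<bullet> w = 0}"
    have sU': "subspace U'" unfolding U'_def subspace_def using less.prems(1)
      by (auto simp: subspace_def inner_add_right)
    have iU': "\<forall>u\<in>U'. A *v u \<in> U'"
    proof
      fix u assume u: "u \<in> U'"
      have "v \<bullet> (A *v u) = (A *v v) \<bullet> u" using sym_inner[OF symA] by simp
      also have "\<dots> = 0" using u unfolding U'_def by (subst ev) simp
      finally show "A *v u \<in> U'" using u less.prems(2) unfolding U'_def by auto
    qed
    have "U' \<subset> U" using vU vv unfolding U'_def by (metis (mono_tags, lifting) mem_Collect_eq psubsetI subsetI zero_neq_one)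
    then have "span U' \<subset> span U" using sU' less.prems(1) by (metis span_eq_iff)
    then have "dim U' < dim U" by (rule dim_psubset)
    from less.hyps[OF this sU' iU'] obtain B where B: "finite B" "B \<subseteq> U'" "pairwise orthogonal B"
      "\<forall>v\<in>B. norm v = 1 \<and> A *v v = (v \<bullet> (A *v v)) *\<^sub>R v" "span B = U'" by blast
    have vB: "v \<notin> B" using B(2) vv unfolding U'_def by auto
    show ?thesis
    proof (intro exI[of _ "insert v B"] conjI)
      show "finite (insert v B)" using B by simp
      show "insert v B \<subseteq> U" using B(2) vU unfolding U'_def by auto
      show "pairwise orthogonal (insert v B)"
        using B(2,3) unfolding U'_def pairwise_insert
        by (auto simp: orthogonal_def inner_commute)
      show "\<forall>x\<in>insert v B. norm x = 1 \<and> A *v x = (x \<bullet> (A *v x)) *\<^sub>R x" using B(4) nv ev by auto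
      show "span (insert v B) = U"
      proof
        show "span (insert v B) \<subseteq> U"
          using \<open>insert v B \<subseteq> U\<close> less.prems(1) span_minimal by blast
        show "U \<subseteq> span (insert v B)"
        proof
          fix u assume u: "u \<in> U"
          have "u - (v \<bullet> u) *\<^sub>R v \<in> U'" unfolding U'_def using u vU less.prems(1) vv
            by (simp add: subspace_diff subspace_scale inner_diff_right)
          then have "u - (v \<bullet> u) *\<^sub>R v \<in> span (insert v B)" using B(5)
            by (metis span_mono subset_insertI subsetD)
          moreover have "(v \<bullet> u) *\<^sub>R v \<in> span (insert v B)" by (simp add: span_base span_scale)
          ultimately have "(u - (v \<bullet> u) *\<^sub>R v) + (v \<bullet> u) *\<^sub>R v \<in> span (insert v B)" by (rule span_add)
          then show "u \<in> span (insert v B)" by simp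
        qed
      qed
    qed
  qed
qed

definition bproj :: "('n::finite \<Rightarrow> 'b) \<Rightarrow> 'b \<Rightarrow> real^'n \<Rightarrow> real^'n" where
  "bproj blk b v = (\<chi> i. if blk i = b then v$i else 0)"

lemma block_vec_bproj: "block_vec blk b (bproj blk b v)"
  by (simp add: block_vec_def bproj_def)

lemma sum_bproj: "(\<Sum>b\<in>(UNIV::'b::finite set). bproj blk b v) = v"
  by (simp add: vec_eq_iff sum_component bproj_def)

lemma subspace_block: "subspace {v. block_vec blk b v}"
  by (simp add: subspace_def block_vec_def)

lemma block_orth:
  assumes "block_vec blk b u" "block_vec blk c w" "b \<noteq> c"
  shows "u \<bullet> w = 0"
proof -
  have "\<And>i. u$i * w$i = 0" using assms unfolding block_vec_def by (metis mult_zero_left mult_zero_right)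
  then show ?thesis unfolding inner_vec_def by (intro sum.neutral) auto
qed

lemma bproj_id: "block_vec blk b v \<Longrightarrow> bproj blk b v = v"
  by (auto simp: vec_eq_iff bproj_def block_vec_def)

lemma bproj_other: "block_vec blk c v \<Longrightarrow> b \<noteq> c \<Longrightarrow> bproj blk b v = 0"
  by (auto simp: vec_eq_iff bproj_def block_vec_def)

lemma block_diag_vec:
  assumes "block_diag blk A" "block_vec blk b v"
  shows "block_vec blk b (A *v v)"
  unfolding block_vec_def
proof (intro allI impI)
  fix i assume "blk i \<noteq> b"
  then have "\<And>j. A$i$j * v$j = 0" using assms unfolding block_diag_def block_vec_def
    by (metis mult_zero_left mult_zero_right)
  then show "(A *v v) $ i = 0" unfolding matrix_vector_mult_def by (simp, intro sum.neutral) auto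
qed

lemma quad_split:
  fixes A :: "real^'n^'n" and blk :: "'n \<Rightarrow> 'b::finite"
  assumes "block_diag blk A"
  shows "x \<bullet> (A *v y) = (\<Sum>b\<in>UNIV. bproj blk b x \<bullet> (A *v bproj blk b y))"
proof -
  have "x \<bullet> (A *v y) = (\<Sum>b\<in>UNIV. bproj blk b x) \<bullet> (A *v (\<Sum>c\<in>UNIV. bproj blk c y))"
    by (simp add: sum_bproj)
  also have "\<dots> = (\<Sum>c\<in>UNIV. \<Sum>b\<in>UNIV. bproj blk b x \<bullet> (A *v bproj blk c y))"
    by (simp add: inner_sum_left inner_sum_right linear_sum[OF matrix_vector_mul_linear])
  also have "\<dots> = (\<Sum>b\<in>UNIV. \<Sum>c\<in>UNIV. bproj blk b x \<bullet> (A *v bproj blk c y))"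
    by (rule sum.swap)
  also have "\<dots> = (\<Sum>b\<in>UNIV. bproj blk b x \<bullet> (A *v bproj blk b y))"
  proof (rule sum.cong[OF refl])
    fix b
    have "(\<Sum>c\<in>UNIV. bproj blk b x \<bullet> (A *v bproj blk c y)) =
          (\<Sum>c\<in>UNIV. if c = b then bproj blk b x \<bullet> (A *v bproj blk b y) else 0)"
    proof (rule sum.cong[OF refl])
      fix c show "bproj blk b x \<bullet> (A *v bproj blk c y) = (if c = b then bproj blk b x \<bullet> (A *v bproj blk b y) else 0)"
      proof (cases "c = b")
        case False
        have "bproj blk b x \<bullet> (A *v bproj blk c y) = 0"
          by (rule block_orth[OF block_vec_bproj block_diag_vec[OF assms block_vec_bproj]]) (use False in auto)
        then show ?thesis using False by simp
      qed simp
    qed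
    then show "(\<Sum>c\<in>UNIV. bproj blk b x \<bullet> (A *v bproj blk c y)) = bproj blk b x \<bullet> (A *v bproj blk b y)"
      by simp
  qed
  finally show ?thesis .
qed

lemma block_spectral:
  fixes A :: "real^'n^'n" and blk :: "'n \<Rightarrow> 'b::finite"
  assumes symA: "sym_mat A" and bd: "block_diag blk A"
  shows "\<exists>B. finite B \<and> pairwise orthogonal B \<and>
        (\<forall>v\<in>B. norm v = 1 \<and> A *v v = (v \<bullet> (A *v v)) *\<^sub>R v \<and> (\<exists>b. block_vec blk b v)) \<and> span B = UNIV"
proof -
  define P where "P = (\<lambda>b B. finite B \<and> B \<subseteq> {v. block_vec blk b v} \<and> pairwise orthogonal B \<and>
        (\<forall>v\<in>B. norm v = 1 \<and> A *v v = (v \<bullet> (A *v v)) *\<^sub>R v) \<and> span B = {v. block_vec blk b v})"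
  have ex: "\<exists>B. P b B" for b
  proof -
    have "\<forall>u\<in>{v. block_vec blk b v}. A *v u \<in> {v. block_vec blk b v}"
      using block_diag_vec[OF bd] by blast
    from spectral_subspace[OF symA subspace_block this] show ?thesis unfolding P_def .
  qed
  define Bf where "Bf b = (SOME B. P b B)" for b
  have Bf: "P b (Bf b)" for b unfolding Bf_def by (rule someI_ex[OF ex])
  define B where "B = (\<Union>b. Bf b)"
  show ?thesis
  proof (intro exI[of _ B] conjI)
    show "finite B" unfolding B_def using Bf unfolding P_def by simp
    show "pairwise orthogonal B" unfolding pairwise_def B_def
    proof (clarify)
      fix u w b c assume u: "u \<in> Bf b" and w: "w \<in> Bf c" and ne: "u \<noteq> w"
      show "orthogonal u w"
      proof (cases "b = c")
        case True
        have "pairwise orthogonal (Bf b)" using Bf[of b] unfolding P_def by simp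
        then show ?thesis using True u w ne unfolding pairwise_def by blast
      next
        case False
        have "block_vec blk b u" "block_vec blk c w" using Bf[of b] Bf[of c] u w unfolding P_def by auto
        then show ?thesis using False block_orth[of blk b u c w] unfolding orthogonal_def by simp
      qed
    qed
    show "\<forall>v\<in>B. norm v = 1 \<and> A *v v = (v \<bullet> (A *v v)) *\<^sub>R v \<and> (\<exists>b. block_vec blk b v)"
    proof
      fix v assume "v \<in> B"
      then obtain b where "v \<in> Bf b" unfolding B_def by blast
      then show "norm v = 1 \<and> A *v v = (v \<bullet> (A *v v)) *\<^sub>R v \<and> (\<exists>b. block_vec blk b v)"
        using Bf[of b] unfolding P_def by blast
    qed
    show "span B = UNIV"
    proof (rule set_eqI, rule iffI)
      fix x :: "real^'n"
      have "\<And>b. bproj blk b x \<in> span B"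
      proof -
        fix b
        have "bproj blk b x \<in> span (Bf b)" using Bf[of b] block_vec_bproj unfolding P_def by auto
        moreover have "span (Bf b) \<subseteq> span B" unfolding B_def by (rule span_mono) auto
        ultimately show "bproj blk b x \<in> span B" by blast
      qed
      then have "(\<Sum>b\<in>UNIV. bproj blk b x) \<in> span B" by (simp add: span_sum)
      then show "x \<in> span B" by (simp add: sum_bproj)
    qed simp
  qed
qed

definition outer :: "real^'n \<Rightarrow> real^'n^'n" where
  "outer v = (\<chi> i j. v$i * v$j)"

definition fm :: "(real^'n) set \<Rightarrow> (real^'n \<Rightarrow> real) \<Rightarrow> real^'n^'n" where
  "fm B h = (\<Sum>v\<in>B. h v *\<^sub>R outer v)"

definition onb :: "(real^'n) set \<Rightarrow> bool" where
  "onb B \<longleftrightarrow> finite B \<and> pairwise orthogonal B \<and> (\<forall>v\<in>B. norm v = 1) \<and> span B = UNIV"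

lemma outer_apply: "outer v *v x = (v \<bullet> x) *\<^sub>R v"
  by (simp add: vec_eq_iff outer_def matrix_vector_mult_def inner_vec_def sum_distrib_left mult.commute mult.left_commute)

lemma sum_mat_apply: "finite B \<Longrightarrow> (\<Sum>v\<in>B. M v) *v x = (\<Sum>v\<in>B. M v *v x)"
  by (induction B rule: finite_induct) (simp_all add: matrix_vector_mult_add_rdistrib)

lemma fm_apply: "finite B \<Longrightarrow> fm B h *v x = (\<Sum>v\<in>B. (h v * (v \<bullet> x)) *\<^sub>R v)"
  unfolding fm_def by (simp add: sum_mat_apply outer_apply flip: scaleR_matrix_vector_assoc)

lemma onb_inner: "onb B \<Longrightarrow> v \<in> B \<Longrightarrow> w \<in> B \<Longrightarrow> v \<bullet> w = (if v = w then 1 else 0)"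
  unfolding onb_def pairwise_def orthogonal_def by (auto simp: norm_eq_1)

lemma onb_expand: "onb B \<Longrightarrow> (\<Sum>v\<in>B. (v \<bullet> x) *\<^sub>R v) = x"
  using orthonormal_basis_expand[of B x] unfolding onb_def by (simp add: inner_commute)

lemma fm_eig: assumes "onb B" "w \<in> B" shows "fm B h *v w = h w *\<^sub>R w"
proof -
  have fin: "finite B" using assms unfolding onb_def by simp
  have "fm B h *v w = (\<Sum>v\<in>B. if v = w then h w *\<^sub>R w else 0)"
    unfolding fm_apply[OF fin] by (rule sum.cong) (auto simp: onb_inner[OF assms(1) _ assms(2)])
  also have "\<dots> = h w *\<^sub>R w" using assms(2) fin by simp
  finally show ?thesis .
qed

lemma fm_mult: assumes "onb B" shows "fm B h ** fm B k = fm B (\<lambda>v. h v * k v)"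
proof -
  have fin: "finite B" using assms unfolding onb_def by simp
  show ?thesis unfolding matrix_eq
  proof
    fix x
    have "(fm B h ** fm B k) *v x = fm B h *v (\<Sum>v\<in>B. (k v * (v \<bullet> x)) *\<^sub>R v)"
      by (simp add: fm_apply[OF fin, of k] flip: matrix_vector_mul_assoc)
    also have "\<dots> = (\<Sum>v\<in>B. (k v * (v \<bullet> x)) *\<^sub>R (fm B h *v v))"
      by (simp add: linear_sum[OF matrix_vector_mul_linear] matrix_vector_mult_scaleR)
    also have "\<dots> = (\<Sum>v\<in>B. (k v * (v \<bullet> x)) *\<^sub>R (h v *\<^sub>R v))"
      by (rule sum.cong) (simp_all add: fm_eig[OF assms])
    also have "\<dots> = fm B (\<lambda>v. h v * k v) *v x"
      by (simp add: fm_apply[OF fin] ac_simps)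
    finally show "(fm B h ** fm B k) *v x = fm B (\<lambda>v. h v * k v) *v x" .
  qed
qed

lemma fm_one: assumes "onb B" shows "fm B (\<lambda>_. 1) = mat 1"
  unfolding matrix_eq using assms by (simp add: fm_apply onb_def[of B] onb_expand)

lemma fm_eigbasis:
  assumes "onb B" "\<forall>v\<in>B. A *v v = (v \<bullet> (A *v v)) *\<^sub>R v"
  shows "fm B (\<lambda>v. v \<bullet> (A *v v)) = A"
  unfolding matrix_eq
proof
  fix x
  have fin: "finite B" using assms unfolding onb_def by simp
  have "A *v x = A *v (\<Sum>v\<in>B. (v \<bullet> x) *\<^sub>R v)" using onb_expand[OF assms(1)] by simp
  also have "\<dots> = (\<Sum>v\<in>B. (v \<bullet> x) *\<^sub>R (A *v v))"
    by (simp add: linear_sum[OF matrix_vector_mul_linear] matrix_vector_mult_scaleR)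
  also have "\<dots> = fm B (\<lambda>v. v \<bullet> (A *v v)) *v x"
    unfolding fm_apply[OF fin]
  proof (rule sum.cong[OF refl])
    fix v assume "v \<in> B"
    then have eq: "A *v v = (v \<bullet> (A *v v)) *\<^sub>R v" using assms(2) by blast
    have "(v \<bullet> x) *\<^sub>R (A *v v) = (v \<bullet> x) *\<^sub>R ((v \<bullet> (A *v v)) *\<^sub>R v)"
      by (subst eq) (rule refl)
    then show "(v \<bullet> x) *\<^sub>R (A *v v) = ((v \<bullet> (A *v v)) * (v \<bullet> x)) *\<^sub>R v"
      by (simp add: mult.commute)
  qed
  finally show "fm B (\<lambda>v. v \<bullet> (A *v v)) *v x = A *v x" by simp
qed

lemma fm_sym: "sym_mat (fm B h)"
  by (simp add: sym_mat_def fm_def outer_def transpose_def vec_eq_iff sum_component mult.commute)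

lemma fm_quad: "finite B \<Longrightarrow> x \<bullet> (fm B h *v x) = (\<Sum>v\<in>B. h v * (v \<bullet> x)^2)"
  by (simp add: fm_apply inner_sum_right power2_eq_square inner_commute mult.assoc)

lemma fm_block:
  assumes "onb B" "\<forall>v\<in>B. \<exists>b. block_vec blk b v" "block_vec blk b u"
  shows "block_vec blk b (fm B h *v u)"
  unfolding block_vec_def
proof (intro allI impI)
  fix i assume bi: "blk i \<noteq> b"
  have fin: "finite B" using assms(1) unfolding onb_def by simp
  have "(fm B h *v u) $ i = (\<Sum>v\<in>B. h v * (v \<bullet> u) * v$i)"
    by (simp add: fm_apply[OF fin] sum_component)
  also have "\<dots> = 0"
  proof (rule sum.neutral, rule ballI)
    fix v assume vB: "v \<in> B"
    obtain c where c: "block_vec blk c v" using assms(2) vB by blast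
    show "h v * (v \<bullet> u) * v$i = 0"
    proof (cases "c = b")
      case True
      then have "v$i = 0" using c bi unfolding block_vec_def by blast
      then show ?thesis by simp
    next
      case False
      then have "v \<bullet> u = 0" by (rule block_orth[OF c assms(3)])
      then show ?thesis by simp
    qed
  qed
  finally show "(fm B h *v u) $ i = 0" .
qed

lemma fm_cong: "(\<And>v. v \<in> B \<Longrightarrow> h v = k v) \<Longrightarrow> fm B h = fm B k"
  unfolding fm_def by (rule sum.cong) auto

lemma W_struct:
  fixes W :: "real^'n^'n" and blk :: "'n \<Rightarrow> 'b::finite"
  assumes symW: "sym_mat W" and bdW: "block_diag blk W" and pdW: "\<And>b. block_pd blk b W"
  shows "\<exists>R R'. psd_sqrt (matrix_inv W) = R \<and> sym_mat R \<and> sym_mat R' \<and> R ** R' = mat 1 \<and>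
      R' ** R = mat 1 \<and> R' ** R' = W \<and> (\<forall>b u. block_vec blk b u \<longrightarrow> block_vec blk b (R' *v u)) \<and>
      (\<forall>b u. block_vec blk b u \<longrightarrow> block_vec blk b (R *v u))"
proof -
  obtain B where B: "finite B" "pairwise orthogonal B"
    "\<forall>v\<in>B. norm v = 1 \<and> W *v v = (v \<bullet> (W *v v)) *\<^sub>R v \<and> (\<exists>b. block_vec blk b v)" "span B = UNIV"
    using block_spectral[OF symW bdW] by blast
  have Bn: "\<And>v. v \<in> B \<Longrightarrow> norm v = 1" and Be: "\<forall>v\<in>B. W *v v = (v \<bullet> (W *v v)) *\<^sub>R v"
    and Bb: "\<forall>v\<in>B. \<exists>b. block_vec blk b v" using B(3) by blast+
  have onb: "onb B" using B(1,2,4) Bn unfolding onb_def by blast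
  have fin: "finite B" by (rule B(1))
  define lam where "lam v = v \<bullet> (W *v v)" for v
  have lam_pos: "lam v > 0" if vB: "v \<in> B" for v
  proof -
    from Bb vB obtain b where b: "block_vec blk b v" by blast
    have nz: "v \<noteq> 0" using Bn[OF vB] by (metis norm_zero zero_neq_one)
    have "block_pd blk b W" by (rule pdW)
    then have "\<forall>u. block_vec blk b u \<and> u \<noteq> 0 \<longrightarrow> u \<bullet> (W *v u) > 0" by (simp only: block_pd_def)
    then have "v \<bullet> (W *v v) > 0" using b nz by blast
    then show ?thesis by (simp only: lam_def)
  qed
  have lam_nz: "lam v \<noteq> 0" if "v \<in> B" for v using lam_pos[OF that] by linarith
  have lam_ge: "lam v \<ge> 0" if "v \<in> B" for v using lam_pos[OF that] by linarith
  have Weq: "W = fm B lam" unfolding lam_def using fm_eigbasis[OF onb Be] by simp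
  define Winv where "Winv = fm B (\<lambda>v. inverse (lam v))"
  define R where "R = fm B (\<lambda>v. sqrt (inverse (lam v)))"
  define R' where "R' = fm B (\<lambda>v. sqrt (lam v))"
  have WWi: "W ** Winv = mat 1" unfolding Weq Winv_def fm_mult[OF onb] fm_one[OF onb, symmetric]
    by (rule fm_cong) (simp add: lam_nz lam_ge)
  have WiW: "Winv ** W = mat 1" unfolding Weq Winv_def fm_mult[OF onb] fm_one[OF onb, symmetric]
    by (rule fm_cong) (simp add: lam_nz lam_ge)
  have inv: "matrix_inv W = Winv"
    unfolding matrix_inv_def
  proof (rule some_equality)
    show "W ** Winv = mat 1 \<and> Winv ** W = mat 1" using WWi WiW by simp
    fix A' assume asm: "W ** A' = mat 1 \<and> A' ** W = mat 1"
    have "A' = A' ** (W ** Winv)" using WWi by simp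
    also have "\<dots> = (A' ** W) ** Winv" by (simp add: matrix_mul_assoc)
    also have "\<dots> = Winv" using asm by simp
    finally show "A' = Winv" .
  qed
  have RR: "R ** R = Winv" unfolding R_def Winv_def fm_mult[OF onb]
    by (rule fm_cong) (simp add: lam_nz lam_ge)
  have Rpsd: "psd_mat R" unfolding psd_mat_def R_def fm_quad[OF fin]
    by (auto intro!: sum_nonneg mult_nonneg_nonneg simp: lam_ge)
  have sqrt_unique: "psd_sqrt Winv = R"
    unfolding psd_sqrt_def
  proof (rule the_equality)
    show "sym_mat R \<and> psd_mat R \<and> R ** R = Winv" using RR Rpsd by (simp add: R_def fm_sym)
    fix Q assume Q: "sym_mat Q \<and> psd_mat Q \<and> Q ** Q = Winv"
    have Qv: "Q *v v = R *v v" if vB: "v \<in> B" for v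
    proof -
      define s where "s = sqrt (inverse (lam v))"
      have s: "s > 0" "s * s = inverse (lam v)" unfolding s_def using lam_pos[OF vB] by auto
      have Wiv: "Q *v (Q *v v) = (s * s) *\<^sub>R v"
        using Q fm_eig[OF onb vB, of "\<lambda>v. inverse (lam v)"] s(2) unfolding Winv_def
        by (simp add: matrix_vector_mul_assoc)
      define w where "w = Q *v v - s *\<^sub>R v"
      have Qw: "Q *v w = - s *\<^sub>R w"
        unfolding w_def by (simp add: matrix_vector_mult_diff_distrib matrix_vector_mult_scaleR Wiv algebra_simps)
      have "0 \<le> w \<bullet> (Q *v w)" using Q unfolding psd_mat_def by blast
      also have "\<dots> = - s * (w \<bullet> w)" unfolding Qw by simp
      finally have "w \<bullet> w \<le> 0" using s(1) by (simp add: mult_le_0_iff)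
      then have "w = 0" by (metis inner_ge_zero inner_eq_zero_iff order_antisym)
      then show ?thesis unfolding w_def R_def s_def using fm_eig[OF onb vB] by simp
    qed
    show "Q = R" unfolding matrix_eq
    proof
      fix x
      have "Q *v x = Q *v (\<Sum>v\<in>B. (v \<bullet> x) *\<^sub>R v)" using onb_expand[OF onb] by simp
      also have "\<dots> = (\<Sum>v\<in>B. (v \<bullet> x) *\<^sub>R (Q *v v))"
        by (simp add: linear_sum[OF matrix_vector_mul_linear] matrix_vector_mult_scaleR)
      also have "\<dots> = (\<Sum>v\<in>B. (v \<bullet> x) *\<^sub>R (R *v v))" by (rule sum.cong) (simp_all add: Qv)
      also have "\<dots> = R *v (\<Sum>v\<in>B. (v \<bullet> x) *\<^sub>R v)"
        by (simp add: linear_sum[OF matrix_vector_mul_linear] matrix_vector_mult_scaleR)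
      also have "\<dots> = R *v x" using onb_expand[OF onb] by simp
      finally show "Q *v x = R *v x" .
    qed
  qed
  have RR': "R ** R' = mat 1" unfolding R_def R'_def fm_mult[OF onb] fm_one[OF onb, symmetric]
    by (rule fm_cong) (simp add: lam_nz lam_ge real_sqrt_mult[symmetric])
  have R'R: "R' ** R = mat 1" unfolding R_def R'_def fm_mult[OF onb] fm_one[OF onb, symmetric]
    by (rule fm_cong) (simp add: lam_nz lam_ge real_sqrt_mult[symmetric])
  have R'R': "R' ** R' = W" unfolding Weq R'_def fm_mult[OF onb]
    by (rule fm_cong) (simp add: lam_nz lam_ge)
  have blkR': "\<forall>b u. block_vec blk b u \<longrightarrow> block_vec blk b (R' *v u)"
    unfolding R'_def using fm_block[OF onb Bb] by blast
  have blkR: "\<forall>b u. block_vec blk b u \<longrightarrow> block_vec blk b (R *v u)"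
    unfolding R_def using fm_block[OF onb Bb] by blast
  have "psd_sqrt (matrix_inv W) = R \<and> sym_mat R \<and> sym_mat R' \<and> R ** R' = mat 1 \<and>
      R' ** R = mat 1 \<and> R' ** R' = W \<and> (\<forall>b u. block_vec blk b u \<longrightarrow> block_vec blk b (R' *v u)) \<and>
      (\<forall>b u. block_vec blk b u \<longrightarrow> block_vec blk b (R *v u))"
    using inv sqrt_unique RR' R'R R'R' blkR' blkR by (simp add: R_def R'_def fm_sym)
  then show ?thesis by (rule exI[of _ R, OF exI[of _ R']])
qed

lemma rayleigh_block_bound:
  fixes E :: "real^'n^'n" and blk :: "'n \<Rightarrow> 'b"
  assumes symE: "sym_mat E" and bdE: "block_diag blk E" and g: "\<gamma> > 0"
    and step: "\<gamma> \<le> inverse (block_lambda_max blk b E)" and v: "block_vec blk b v"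
  shows "\<gamma> * (v \<bullet> (E *v v)) \<le> v \<bullet> v"
proof (cases "v = 0")
  case True then show ?thesis by simp
next
  case False
  have "\<forall>u\<in>{v. block_vec blk b v}. E *v u \<in> {v. block_vec blk b v}"
    using block_diag_vec[OF bdE] by blast
  from spectral_subspace[OF symE subspace_block this] obtain C where
    C: "finite C" "C \<subseteq> {v. block_vec blk b v}" "pairwise orthogonal C"
      "\<forall>v\<in>C. norm v = 1 \<and> E *v v = (v \<bullet> (E *v v)) *\<^sub>R v" "span C = {v. block_vec blk b v}"
    by blast
  have Cn: "\<And>w. w \<in> C \<Longrightarrow> norm w = 1" and Ce: "\<forall>w\<in>C. E *v w = (w \<bullet> (E *v w)) *\<^sub>R w"
    using C(4) by blast+
  define lam where "lam w = w \<bullet> (E *v w)" for w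
  have Cev: "E *v w = lam w *\<^sub>R w" if "w \<in> C" for w using Ce that unfolding lam_def by blast
  have exp: "(\<Sum>w\<in>C. (u \<bullet> w) *\<^sub>R w) = u" if "u \<in> span C" for u
    by (rule orthonormal_basis_expand[OF C(3) Cn that C(1)])
  have Eexp: "E *v u = (\<Sum>w\<in>C. ((u \<bullet> w) * lam w) *\<^sub>R w)" if "u \<in> span C" for u
  proof -
    have "E *v u = E *v (\<Sum>w\<in>C. (u \<bullet> w) *\<^sub>R w)" using exp[OF that] by simp
    also have "\<dots> = (\<Sum>w\<in>C. (u \<bullet> w) *\<^sub>R (E *v w))"
      by (simp add: linear_sum[OF matrix_vector_mul_linear] matrix_vector_mult_scaleR)
    also have "\<dots> = (\<Sum>w\<in>C. ((u \<bullet> w) * lam w) *\<^sub>R w)"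
      by (rule sum.cong[OF refl]) (simp add: Cev)
    finally show ?thesis .
  qed
  define Eig where "Eig = {c. \<exists>v. block_vec blk b v \<and> v \<noteq> 0 \<and> E *v v = c *\<^sub>R v}"
  have Eig_sub: "Eig \<subseteq> lam ` C"
  proof
    fix c assume "c \<in> Eig"
    then obtain u where u: "block_vec blk b u" "u \<noteq> 0" "E *v u = c *\<^sub>R u" unfolding Eig_def by blast
    have uC: "u \<in> span C" using u(1) C(5) by simp
    obtain w where wC: "w \<in> C" and uw: "u \<bullet> w \<noteq> 0"
    proof (rule ccontr)
      assume "\<not> thesis"
      then have "\<forall>w\<in>C. u \<bullet> w = 0" using that by blast
      then have "(\<Sum>w\<in>C. (u \<bullet> w) *\<^sub>R w) = 0" by simp
      then show False using exp[OF uC] u(2) by simp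
    qed
    have "w \<bullet> (E *v u) = (E *v w) \<bullet> u" using sym_inner[OF symE, of w u] by simp
    then have "c * (w \<bullet> u) = lam w * (w \<bullet> u)" using u(3) Cev[OF wC] by simp
    then have "c = lam w" using uw by (simp add: inner_commute)
    then show "c \<in> lam ` C" using wC by blast
  qed
  have fin: "finite Eig" using finite_subset[OF Eig_sub] C(1) by blast
  have lamEig: "lam w \<in> Eig" if "w \<in> C" for w
  proof -
    have "w \<noteq> 0" using Cn[OF that] by (metis norm_zero zero_neq_one)
    then show ?thesis unfolding Eig_def using C(2) that Cev[OF that] by blast
  qed
  have vC: "v \<in> span C" using v C(5) by simp
  have "C \<noteq> {}" using exp[OF vC] False by auto
  then have "Eig \<noteq> {}" using lamEig by blast
  define m where "m = Max Eig"
  have lam_le: "lam w \<le> m" if "w \<in> C" for w unfolding m_def using fin lamEig[OF that] by simp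
  have "block_lambda_max blk b E = m" unfolding m_def Eig_def block_lambda_max_def by simp
  then have gm: "\<gamma> \<le> inverse m" using step by simp
  have mpos: "m > 0"
  proof (rule ccontr)
    assume "\<not> m > 0"
    then have "inverse m \<le> 0" by simp
    then show False using gm g by linarith
  qed
  have gm1: "\<gamma> * m \<le> 1" using gm mpos by (simp add: field_simps)
  have q: "v \<bullet> (E *v v) = (\<Sum>w\<in>C. lam w * (v \<bullet> w)^2)"
    unfolding Eexp[OF vC] by (simp add: inner_sum_right power2_eq_square mult_ac)
  have n: "v \<bullet> v = (\<Sum>w\<in>C. (v \<bullet> w)^2)"
  proof -
    have "v \<bullet> v = v \<bullet> (\<Sum>w\<in>C. (v \<bullet> w) *\<^sub>R w)" using exp[OF vC] by simp
    also have "\<dots> = (\<Sum>w\<in>C. (v \<bullet> w)^2)" by (simp add: inner_sum_right power2_eq_square)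
    finally show ?thesis .
  qed
  have "\<gamma> * (v \<bullet> (E *v v)) = (\<Sum>w\<in>C. (\<gamma> * lam w) * (v \<bullet> w)^2)"
    unfolding q by (simp add: sum_distrib_left mult_ac)
  also have "\<dots> \<le> (\<Sum>w\<in>C. 1 * (v \<bullet> w)^2)"
  proof (rule sum_mono)
    fix w assume "w \<in> C"
    have "\<gamma> * lam w \<le> \<gamma> * m" using lam_le[OF \<open>w \<in> C\<close>] g by simp
    then have "\<gamma> * lam w \<le> 1" using gm1 by linarith
    then show "(\<gamma> * lam w) * (v \<bullet> w)^2 \<le> 1 * (v \<bullet> w)^2" by (rule mult_right_mono) simp
  qed
  also have "\<dots> = v \<bullet> v" using n by simp
  finally show ?thesis .
qed

lemma matrix_add_rdistrib': "((A::real^'n^'m) + B) ** C = A ** C + B ** C"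
  by (vector matrix_matrix_mult_def sum.distrib[symmetric] field_simps)

lemma mvm_bilinear: "bilinear (\<lambda>(A::real^'n^'m) (v::real^'n). A *v v)"
  unfolding bilinear_def
  by (auto intro!: linearI simp: matrix_vector_right_distrib matrix_vector_mult_add_rdistrib
      matrix_vector_mult_scaleR scaleR_matrix_vector_assoc[symmetric])

lemma mvm_measurable[measurable]:
  fixes A :: "'a \<Rightarrow> real^'n^'m" and v :: "'a \<Rightarrow> real^'n"
  assumes "A \<in> borel_measurable M" "v \<in> borel_measurable M"
  shows "(\<lambda>\<omega>. A \<omega> *v v \<omega>) \<in> borel_measurable M"
proof -
  have bb: "bounded_bilinear (\<lambda>(A::real^'n^'m) (v::real^'n). A *v v)"
    using mvm_bilinear bilinear_conv_bounded_bilinear by blast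
  have c: "continuous_on UNIV (\<lambda>p::((real^'n^'m) \<times> (real^'n)). fst p *v snd p)"
    using bounded_bilinear.continuous_on[OF bb continuous_on_fst[OF continuous_on_id] continuous_on_snd[OF continuous_on_id]]
    by simp
  have p: "(\<lambda>\<omega>. (A \<omega>, v \<omega>)) \<in> borel_measurable M"
    using assms by (simp add: borel_prod[symmetric])
  show ?thesis using borel_measurable_continuous_on[OF c p] by simp
qed

lemma mmm_measurable[measurable]:
  fixes A :: "'a \<Rightarrow> real^'n^'m" and B :: "'a \<Rightarrow> real^'k^'n"
  assumes "A \<in> borel_measurable M" "B \<in> borel_measurable M"
  shows "(\<lambda>\<omega>. A \<omega> ** B \<omega>) \<in> borel_measurable M"
proof -
  have bl: "bilinear (\<lambda>(A::real^'n^'m) (B::real^'k^'n). A ** B)"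
    unfolding bilinear_def
    by (auto intro!: linearI simp: matrix_add_ldistrib matrix_add_rdistrib' matrix_scalar_ac scalar_matrix_assoc)
  have bb: "bounded_bilinear (\<lambda>(A::real^'n^'m) (B::real^'k^'n). A ** B)"
    using bl bilinear_conv_bounded_bilinear by blast
  have c: "continuous_on UNIV (\<lambda>p::((real^'n^'m) \<times> (real^'k^'n)). fst p ** snd p)"
    using bounded_bilinear.continuous_on[OF bb continuous_on_fst[OF continuous_on_id] continuous_on_snd[OF continuous_on_id]]
    by simp
  have p: "(\<lambda>\<omega>. (A \<omega>, B \<omega>)) \<in> borel_measurable M"
    using assms by (simp add: borel_prod[symmetric])
  show ?thesis using borel_measurable_continuous_on[OF c p] by simp
qed


lemma f_grad_measurable:
  fixes f :: "real^'n \<Rightarrow> real" and grad :: "real^'n \<Rightarrow> real^'n"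
  assumes der: "\<And>y. (f has_derivative (\<lambda>h. grad y \<bullet> h)) (at y)"
  shows "f \<in> borel_measurable borel" "grad \<in> borel_measurable borel"
proof -
  have cf: "continuous_on UNIV f"
    using der has_derivative_continuous continuous_at_imp_continuous_on by blast
  then show fm: "f \<in> borel_measurable borel" by (rule borel_measurable_continuous_onI)
  show "grad \<in> borel_measurable borel"
    unfolding borel_measurable_euclidean_space[where f=grad]
  proof
    fix e :: "real^'n" assume "e \<in> Basis"
    define u where "u m y = (f (y + inverse (real (Suc m)) *\<^sub>R e) - f y) / inverse (real (Suc m))" for m y
    show "(\<lambda>y. grad y \<bullet> e) \<in> borel_measurable borel"
    proof (rule borel_measurable_LIMSEQ_real[where u=u])
      fix m
      have "(\<lambda>y. f (y + inverse (real (Suc m)) *\<^sub>R e)) \<in> borel_measurable borel"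
        by (intro borel_measurable_continuous_on[OF cf]) simp
      then show "u m \<in> borel_measurable borel" unfolding u_def using fm by measurable
    next
      fix y :: "real^'n"
      have "((\<lambda>t. f (y + t *\<^sub>R e)) has_derivative (\<lambda>t. grad y \<bullet> (t *\<^sub>R e))) (at 0)"
      proof -
        have "((\<lambda>t::real. y + t *\<^sub>R e) has_derivative (\<lambda>t. t *\<^sub>R e)) (at 0)"
          by (intro derivative_eq_intros) auto
        from has_derivative_compose[OF this der[of "y + 0 *\<^sub>R e"]] show ?thesis by simp
      qed
      then have "((\<lambda>t. f (y + t *\<^sub>R e)) has_real_derivative (grad y \<bullet> e)) (at 0)"
        by (simp add: has_field_derivative_def mult_commute_abs)
      then have lim: "((\<lambda>h. (f (y + h *\<^sub>R e) - f y) / h) \<longlongrightarrow> grad y \<bullet> e) (at 0)"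
        unfolding DERIV_def by simp
      have s: "(\<lambda>m. inverse (real (Suc m))) \<longlonglongrightarrow> 0" by (rule LIMSEQ_inverse_real_of_nat)
      have nz: "\<And>m. inverse (real (Suc m)) \<in> UNIV - {0}" by simp
      have "((\<lambda>h. (f (y + h *\<^sub>R e) - f y) / h) \<circ> (\<lambda>m. inverse (real (Suc m)))) \<longlonglongrightarrow> grad y \<bullet> e"
        using lim[unfolded tendsto_at_iff_sequentially, rule_format, OF nz s] .
      then show "(\<lambda>m. u m y) \<longlonglongrightarrow> grad y \<bullet> e"
        unfolding u_def comp_def .
    qed
  qed
qed

primrec xrec :: "real^'n^'n \<Rightarrow> (real^'n \<Rightarrow> real^'n) \<Rightarrow> real^'n \<Rightarrow> nat \<Rightarrow> (nat \<Rightarrow> real^'n^'n) \<Rightarrow> real^'n" where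
  "xrec D gr x0 0 r = x0"
| "xrec D gr x0 (Suc k) r = xrec D gr x0 k r - (D ** r k) *v gr (xrec D gr x0 k r)"

lemma xrec_local: "(\<forall>i<k. r i = r' i) \<Longrightarrow> xrec D gr x0 k r = xrec D gr x0 k r'"
  by (induction k) auto

lemma xrec_meas:
  fixes D :: "real^'n^'n" and gr :: "real^'n \<Rightarrow> real^'n"
  assumes gr: "gr \<in> borel_measurable borel"
  shows "{..<k} \<subseteq> J \<Longrightarrow> (\<lambda>r. xrec D gr x0 k r) \<in> borel_measurable (PiM J (\<lambda>_. borel))"
proof (induction k)
  case 0 then show ?case by simp
next
  case (Suc k)
  have "{..<k} \<subseteq> J" using Suc.prems by auto
  then have IH: "(\<lambda>r. xrec D gr x0 k r) \<in> borel_measurable (PiM J (\<lambda>_. borel))" by (rule Suc.IH)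
  have kJ: "k \<in> J" using Suc.prems by auto
  have rk: "(\<lambda>r. r k) \<in> borel_measurable (PiM J (\<lambda>_. borel :: (real^'n^'n) measure))"
    by (rule measurable_component_singleton[OF kJ])
  have "(\<lambda>r. D ** r k) \<in> borel_measurable (PiM J (\<lambda>_. borel :: (real^'n^'n) measure))"
    by (rule mmm_measurable[OF measurable_const rk]) simp
  moreover have "(\<lambda>r. gr (xrec D gr x0 k r)) \<in> borel_measurable (PiM J (\<lambda>_. borel :: (real^'n^'n) measure))"
    using measurable_compose[OF IH gr] .
  ultimately have "(\<lambda>r. (D ** r k) *v gr (xrec D gr x0 k r)) \<in> borel_measurable (PiM J (\<lambda>_. borel))"
    by (rule mvm_measurable)
  then show ?case using IH by simp
qed

lemma (in prob_space) indep_x_S: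
  fixes S :: "nat \<Rightarrow> 'a \<Rightarrow> real^'n^'n"
  assumes ind: "indep_vars (\<lambda>_. borel) S UNIV" and gr: "gr \<in> borel_measurable borel"
  shows "indep_var (borel :: ((real^'n) \<times> (real^'n^'n)) measure) (\<lambda>\<omega>. (xrec D gr x0 k (\<lambda>i. S i \<omega>), 0))
                   borel (\<lambda>\<omega>. (0, S k \<omega>))"
proof -
  have "indep_var (PiM {..<k} (\<lambda>_. borel)) (\<lambda>\<omega>. restrict (\<lambda>i. S i \<omega>) {..<k})
                  (PiM {k} (\<lambda>_. borel)) (\<lambda>\<omega>. restrict (\<lambda>i. S i \<omega>) {k})"
    by (rule indep_var_restrict[OF ind]) auto
  moreover have m1: "(\<lambda>r. (xrec D gr x0 k r, 0::real^'n^'n)) \<in> measurable (PiM {..<k} (\<lambda>_. borel)) (borel :: ((real^'n) \<times> (real^'n^'n)) measure)"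
    unfolding borel_prod[symmetric] using xrec_meas[OF gr, of k "{..<k}" D x0] by simp
  moreover have m2: "(\<lambda>r. (0::real^'n, r k)) \<in> measurable (PiM {k} (\<lambda>_. borel)) (borel :: ((real^'n) \<times> (real^'n^'n)) measure)"
    unfolding borel_prod[symmetric] using measurable_component_singleton[of k "{k}" "\<lambda>_. borel :: (real^'n^'n) measure"] by simp
  ultimately have *: "indep_var borel ((\<lambda>r. (xrec D gr x0 k r, 0::real^'n^'n)) \<circ> (\<lambda>\<omega>. restrict (\<lambda>i. S i \<omega>) {..<k}))
     borel ((\<lambda>r. (0::real^'n, r k)) \<circ> (\<lambda>\<omega>. restrict (\<lambda>i. S i \<omega>) {k}))"
    by (rule indep_var_compose)
  have e1: "(\<lambda>r. (xrec D gr x0 k r, 0::real^'n^'n)) \<circ> (\<lambda>\<omega>. restrict (\<lambda>i. S i \<omega>) {..<k}) = (\<lambda>\<omega>. (xrec D gr x0 k (\<lambda>i. S i \<omega>), 0))"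
    by (rule ext) (simp add: xrec_local[of k _ "\<lambda>i. S i _"])
  have e2: "(\<lambda>r. (0::real^'n, r k)) \<circ> (\<lambda>\<omega>. restrict (\<lambda>i. S i \<omega>) {k}) = (\<lambda>\<omega>. (0, S k \<omega>))"
    by (rule ext) simp
  show ?thesis using * unfolding e1 e2 .
qed

lemma block_scal_apply: "(block_scal blk \<gamma> *v x) $ i = \<gamma> (blk i) * x $ i"
proof -
  have "(block_scal blk \<gamma> *v x) $ i = (\<Sum>j\<in>UNIV. (if i = j then \<gamma> (blk i) else 0) * x $ j)"
    by (simp add: block_scal_def matrix_vector_mult_def)
  also have "\<dots> = (\<Sum>j\<in>UNIV. if j = i then \<gamma> (blk i) * x $ i else 0)"
    by (rule sum.cong) auto
  finally show ?thesis by simp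
qed

lemma block_scal_sym: "sym_mat (block_scal blk \<gamma>)"
  by (simp add: sym_mat_def block_scal_def transpose_def vec_eq_iff)

lemma block_scal_diag: "block_diag blk (block_scal blk \<gamma>)"
  by (simp add: block_diag_def block_scal_def)

lemma block_scal_bvec: "block_vec blk b v \<Longrightarrow> block_scal blk \<gamma> *v v = \<gamma> b *\<^sub>R v"
  by (auto simp: vec_eq_iff block_scal_apply block_vec_def)

lemma bproj_scal: "bproj blk b (block_scal blk \<gamma> *v x) = \<gamma> b *\<^sub>R bproj blk b x"
  by (auto simp: vec_eq_iff block_scal_apply bproj_def)

lemma block_diag_mult:
  assumes "block_diag blk A" "block_diag blk B"
  shows "block_diag blk (A ** B)"
  unfolding block_diag_def
proof (intro allI impI)
  fix i j assume ij: "blk i \<noteq> blk j"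
  have z: "\<And>k. A$i$k * B$k$j = 0"
  proof -
    fix k show "A$i$k * B$k$j = 0"
    proof (cases "blk k = blk i")
      case True then have "B$k$j = 0" using assms(2) ij unfolding block_diag_def by auto
      then show ?thesis by simp
    next
      case False then have "A$i$k = 0" using assms(1) unfolding block_diag_def by metis
      then show ?thesis by simp
    qed
  qed
  have "(\<Sum>k\<in>UNIV. A$i$k * B$k$j) = 0" by (rule sum.neutral) (use z in blast)
  then show "(A ** B) $ i $ j = 0" by (simp add: matrix_matrix_mult_def)
qed

lemma block_scal_commute:
  fixes blk :: "'n::finite \<Rightarrow> 'b::finite" and A :: "real^'n^'n"
  assumes "block_diag blk A"
  shows "block_scal blk \<gamma> ** A = A ** block_scal blk \<gamma>"
  unfolding matrix_eq
proof
  fix x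
  show "(block_scal blk \<gamma> ** A) *v x = (A ** block_scal blk \<gamma>) *v x"
  proof -
    have "(block_scal blk \<gamma> ** A) *v x = block_scal blk \<gamma> *v (A *v (\<Sum>b\<in>UNIV. bproj blk b x))"
      by (simp only: sum_bproj matrix_vector_mul_assoc)
    also have "\<dots> = (\<Sum>b\<in>UNIV. block_scal blk \<gamma> *v (A *v bproj blk b x))"
      by (simp only: linear_sum[OF matrix_vector_mul_linear])
    also have "\<dots> = (\<Sum>b\<in>UNIV. A *v (block_scal blk \<gamma> *v bproj blk b x))"
    proof (rule sum.cong[OF refl])
      fix c
      have v1: "block_vec blk c (bproj blk c x)" by (rule block_vec_bproj)
      have v2: "block_vec blk c (A *v bproj blk c x)" by (rule block_diag_vec[OF assms v1])
      show "block_scal blk \<gamma> *v (A *v bproj blk c x) = A *v (block_scal blk \<gamma> *v bproj blk c x)"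
        unfolding block_scal_bvec[OF v1] block_scal_bvec[OF v2] by (simp add: matrix_vector_mult_scaleR)
    qed
    also have "\<dots> = A *v (block_scal blk \<gamma> *v (\<Sum>b\<in>UNIV. bproj blk b x))"
      by (simp only: linear_sum[OF matrix_vector_mul_linear])
    also have "\<dots> = (A ** block_scal blk \<gamma>) *v x"
      by (simp only: sum_bproj matrix_vector_mul_assoc)
    finally show ?thesis .
  qed
qed

lemma lin_integrable:
  fixes T :: "real^'n^'m \<Rightarrow> 'c::euclidean_space"
  assumes "linear T" "integrable M X"
  shows "integrable M (\<lambda>\<omega>. T (X \<omega>))"
  using integrable_bounded_linear[of T M X] assms linear_conv_bounded_linear by blast

lemma lin_integral:
  fixes T :: "real^'n^'m \<Rightarrow> 'c::euclidean_space"
  assumes "linear T" "integrable M X"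
  shows "integral\<^sup>L M (\<lambda>\<omega>. T (X \<omega>)) = T (integral\<^sup>L M X)"
  using integral_bounded_linear[of T M X] assms linear_conv_bounded_linear by blast

lemma integral_entry:
  fixes X :: "'a \<Rightarrow> real^'n^'m"
  assumes "integrable M X"
  shows "(integral\<^sup>L M X) $ i $ j = integral\<^sup>L M (\<lambda>\<omega>. X \<omega> $ i $ j)"
proof -
  have "linear (\<lambda>A::real^'n^'m. A $ i $ j)"
    by (intro linearI) auto
  from lin_integral[OF this assms] show ?thesis by simp
qed

lemma integral_block_diag:
  fixes X :: "'a \<Rightarrow> real^'n^'n"
  assumes "integrable M X" "\<And>\<omega>. \<omega> \<in> space M \<Longrightarrow> block_diag blk (X \<omega>)"
  shows "block_diag blk (integral\<^sup>L M X)"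
  unfolding block_diag_def
proof (intro allI impI)
  fix i j assume "blk i \<noteq> blk j"
  then have "integral\<^sup>L M (\<lambda>\<omega>. X \<omega> $ i $ j) = integral\<^sup>L M (\<lambda>\<omega>. 0)"
    using assms(2) unfolding block_diag_def by (intro Bochner_Integration.integral_cong) auto
  then show "integral\<^sup>L M X $ i $ j = 0" by (simp add: integral_entry[OF assms(1)])
qed

lemma integral_sym:
  fixes X :: "'a \<Rightarrow> real^'n^'n"
  assumes "integrable M X" "\<And>\<omega>. \<omega> \<in> space M \<Longrightarrow> sym_mat (X \<omega>)"
  shows "sym_mat (integral\<^sup>L M X)"
  unfolding sym_mat_def vec_eq_iff
proof (intro allI)
  fix i j
  have "integral\<^sup>L M (\<lambda>\<omega>. X \<omega> $ j $ i) = integral\<^sup>L M (\<lambda>\<omega>. X \<omega> $ i $ j)"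
  proof (rule Bochner_Integration.integral_cong[OF refl])
    fix \<omega> assume "\<omega> \<in> space M"
    then have "transpose (X \<omega>) = X \<omega>" using assms(2) unfolding sym_mat_def by blast
    then have "transpose (X \<omega>) $ i $ j = X \<omega> $ i $ j" by simp
    then show "X \<omega> $ j $ i = X \<omega> $ i $ j" by (simp add: transpose_def)
  qed
  then show "transpose (integral\<^sup>L M X) $ i $ j = integral\<^sup>L M X $ i $ j"
    by (simp add: transpose_def integral_entry[OF assms(1)])
qed

lemma preserve_block_diag:
  fixes A :: "real^'n^'n"
  assumes "\<forall>b u. block_vec blk b u \<longrightarrow> block_vec blk b (A *v u)"
  shows "block_diag blk A"
  unfolding block_diag_def
proof (intro allI impI)
  fix i j assume ij: "blk i \<noteq> blk j"
  have "block_vec blk (blk j) (axis j 1 :: real^'n)" by (simp add: block_vec_def axis_def)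
  then have "block_vec blk (blk j) (A *v axis j 1)" using assms by blast
  then have "(A *v axis j 1) $ i = 0" using ij unfolding block_vec_def by blast
  then show "A $ i $ j = 0" by (simp add: matrix_vector_mult_basis column_def)
qed

lemma scal_commute_vec:
  fixes blk :: "'n::finite \<Rightarrow> 'b::finite" and X :: "real^'n^'n"
  assumes "block_diag blk X"
  shows "block_scal blk \<gamma> *v (X *v v) = X *v (block_scal blk \<gamma> *v v)"
  by (simp add: matrix_vector_mul_assoc block_scal_commute[OF assms])

lemma B_ident:
  fixes blk :: "'n::finite \<Rightarrow> 'b::finite" and s W L :: "real^'n^'n"
  assumes ss: "sym_mat s" and sb: "block_diag blk s" and Ws: "sym_mat W" and Wb: "block_diag blk W"
    and Ls: "sym_mat L" and Lb: "block_diag blk L"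
  shows "(L *v (((block_scal blk \<gamma> ** W) ** s) *v g)) \<bullet> (((block_scal blk \<gamma> ** W) ** s) *v g)
       = (block_scal blk \<gamma> *v g) \<bullet> ((s ** W ** L ** W ** s) *v (block_scal blk \<gamma> *v g))"
proof -
  let ?G = "block_scal blk \<gamma>"
  have Gs: "sym_mat ?G" by (rule block_scal_sym)
  have z: "((?G ** W) ** s) *v g = ?G *v (W *v (s *v g))" by (simp add: matrix_vector_mul_assoc matrix_mul_assoc)
  have "(L *v (((?G ** W) ** s) *v g)) \<bullet> (((?G ** W) ** s) *v g)
      = (?G *v (W *v (s *v g))) \<bullet> (L *v (?G *v (W *v (s *v g))))"
    unfolding z by (simp add: inner_commute)
  also have "\<dots> = (W *v (s *v g)) \<bullet> (?G *v (L *v (?G *v (W *v (s *v g)))))"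
    by (rule sym_inner[OF Gs])
  also have "?G *v (L *v (?G *v (W *v (s *v g)))) = L *v (W *v (s *v (?G *v (?G *v g))))"
    by (simp add: scal_commute_vec[OF Lb] scal_commute_vec[OF Wb] scal_commute_vec[OF sb])
  also have "(W *v (s *v g)) \<bullet> (L *v (W *v (s *v (?G *v (?G *v g)))))
      = g \<bullet> (s *v (W *v (L *v (W *v (s *v (?G *v (?G *v g)))))))"
    by (simp add: sym_inner[OF Ws] sym_inner[OF ss])
  also have "s *v (W *v (L *v (W *v (s *v (?G *v (?G *v g)))))) = ?G *v (s *v (W *v (L *v (W *v (s *v (?G *v g))))))"
    by (simp add: scal_commute_vec[OF Lb] scal_commute_vec[OF Wb] scal_commute_vec[OF sb])
  also have "g \<bullet> (?G *v (s *v (W *v (L *v (W *v (s *v (?G *v g)))))))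
      = (?G *v g) \<bullet> (s *v (W *v (L *v (W *v (s *v (?G *v g))))))"
    by (rule sym_inner[OF Gs, symmetric])
  also have "s *v (W *v (L *v (W *v (s *v (?G *v g))))) = (s ** W ** L ** W ** s) *v (?G *v g)"
    by (simp only: matrix_vector_mul_assoc matrix_mul_assoc)
  finally show ?thesis .
qed

lemma qf_split:
  fixes blk :: "'n::finite \<Rightarrow> 'b::finite" and W :: "real^'n^'n"
  assumes Wb: "block_diag blk W"
  shows "((block_scal blk \<gamma> ** W) *v g) \<bullet> g = (\<Sum>b\<in>UNIV. \<gamma> b * (bproj blk b g \<bullet> (W *v bproj blk b g)))"
proof -
  have Db: "block_diag blk (block_scal blk \<gamma> ** W)" by (rule block_diag_mult[OF block_scal_diag Wb])
  have "((block_scal blk \<gamma> ** W) *v g) \<bullet> g = g \<bullet> ((block_scal blk \<gamma> ** W) *v g)" by (simp add: inner_commute)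
  also have "\<dots> = (\<Sum>b\<in>UNIV. bproj blk b g \<bullet> ((block_scal blk \<gamma> ** W) *v bproj blk b g))"
    by (rule quad_split[OF Db])
  also have "\<dots> = (\<Sum>b\<in>UNIV. \<gamma> b * (bproj blk b g \<bullet> (W *v bproj blk b g)))"
  proof (rule sum.cong[OF refl])
    fix b
    have "block_vec blk b (W *v bproj blk b g)" by (rule block_diag_vec[OF Wb block_vec_bproj])
    then show "bproj blk b g \<bullet> ((block_scal blk \<gamma> ** W) *v bproj blk b g) = \<gamma> b * (bproj blk b g \<bullet> (W *v bproj blk b g))"
      by (simp add: block_scal_bvec flip: matrix_vector_mul_assoc)
  qed
  finally show ?thesis .
qed

lemma qf_nonneg:
  fixes blk :: "'n::finite \<Rightarrow> 'b::finite" and W :: "real^'n^'n"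
  assumes Wb: "block_diag blk W" and Wpd: "\<And>b. block_pd blk b W" and gp: "\<And>b. \<gamma> b > 0"
  shows "((block_scal blk \<gamma> ** W) *v g) \<bullet> g \<ge> 0"
  unfolding qf_split[OF Wb]
proof (rule sum_nonneg)
  fix b
  have "bproj blk b g \<bullet> (W *v bproj blk b g) \<ge> 0"
  proof (cases "bproj blk b g = 0")
    case True then show ?thesis by simp
  next
    case False
    have "0 < bproj blk b g \<bullet> (W *v bproj blk b g)"
      using Wpd[of b, unfolded block_pd_def, rule_format, of "bproj blk b g"] block_vec_bproj[of blk b g] False by blast
    then show ?thesis by (rule less_imp_le)
  qed
  then show "\<gamma> b * (bproj blk b g \<bullet> (W *v bproj blk b g)) \<ge> 0" using gp[of b] by simp
qed

lemma quad_bound: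
  fixes blk :: "'n::finite \<Rightarrow> 'b::finite" and W EY R' :: "real^'n^'n"
  assumes Wb: "block_diag blk W" and R's: "sym_mat R'" and R'R': "R' ** R' = W"
    and R'b: "\<forall>b u. block_vec blk b u \<longrightarrow> block_vec blk b (R' *v u)"
    and EYs: "sym_mat EY" and EYb: "block_diag blk EY" and gp: "\<And>b. \<gamma> b > 0"
    and step: "\<And>b. \<gamma> b \<le> inverse (block_lambda_max blk b EY)"
  shows "(block_scal blk \<gamma> *v g) \<bullet> ((R' ** EY ** R') *v (block_scal blk \<gamma> *v g))
         \<le> ((block_scal blk \<gamma> ** W) *v g) \<bullet> g"
proof -
  have R'd: "block_diag blk R'" by (rule preserve_block_diag[OF R'b])
  have EZb: "block_diag blk (R' ** EY ** R')" by (intro block_diag_mult R'd EYb)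
  have "(block_scal blk \<gamma> *v g) \<bullet> ((R' ** EY ** R') *v (block_scal blk \<gamma> *v g))
      = (\<Sum>b\<in>UNIV. bproj blk b (block_scal blk \<gamma> *v g) \<bullet> ((R' ** EY ** R') *v bproj blk b (block_scal blk \<gamma> *v g)))"
    by (rule quad_split[OF EZb])
  also have "\<dots> \<le> (\<Sum>b\<in>UNIV. \<gamma> b * (bproj blk b g \<bullet> (W *v bproj blk b g)))"
  proof (rule sum_mono)
    fix b
    let ?gb = "bproj blk b g"
    define v where "v = R' *v ?gb"
    have vb: "block_vec blk b v" unfolding v_def by (rule R'b[rule_format, OF block_vec_bproj])
    have e1: "?gb \<bullet> ((R' ** EY ** R') *v ?gb) = v \<bullet> (EY *v v)"
    proof -
      have "?gb \<bullet> ((R' ** EY ** R') *v ?gb) = ?gb \<bullet> (R' *v (EY *v (R' *v ?gb)))"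
        by (simp only: matrix_vector_mul_assoc matrix_mul_assoc)
      also have "\<dots> = (R' *v ?gb) \<bullet> (EY *v (R' *v ?gb))" by (rule sym_inner[OF R's, symmetric])
      finally show ?thesis unfolding v_def .
    qed
    have e2: "v \<bullet> v = ?gb \<bullet> (W *v ?gb)"
    proof -
      have "v \<bullet> v = ?gb \<bullet> (R' *v (R' *v ?gb))" unfolding v_def by (rule sym_inner[OF R's])
      also have "\<dots> = ?gb \<bullet> (W *v ?gb)" by (simp only: matrix_vector_mul_assoc R'R')
      finally show ?thesis .
    qed
    have rb: "\<gamma> b * (v \<bullet> (EY *v v)) \<le> v \<bullet> v"
      by (rule rayleigh_block_bound[OF EYs EYb gp[of b] step[of b] vb])
    have "bproj blk b (block_scal blk \<gamma> *v g) \<bullet> ((R' ** EY ** R') *v bproj blk b (block_scal blk \<gamma> *v g))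
        = \<gamma> b * (\<gamma> b * (v \<bullet> (EY *v v)))"
      unfolding bproj_scal by (simp add: matrix_vector_mult_scaleR e1)
    also have "\<dots> \<le> \<gamma> b * (v \<bullet> v)" using rb gp[of b] by (simp add: mult_left_mono)
    also have "\<dots> = \<gamma> b * (?gb \<bullet> (W *v ?gb))" by (simp add: e2)
    finally show "bproj blk b (block_scal blk \<gamma> *v g) \<bullet> ((R' ** EY ** R') *v bproj blk b (block_scal blk \<gamma> *v g))
        \<le> \<gamma> b * (?gb \<bullet> (W *v ?gb))" .
  qed
  also have "\<dots> = ((block_scal blk \<gamma> ** W) *v g) \<bullet> g" by (rule qf_split[OF Wb, symmetric])
  finally show ?thesis .
qed

lemma sym_prod7:
  assumes "sym_mat R" "sym_mat S" "sym_mat W" "sym_mat L"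
  shows "sym_mat (R ** S ** W ** L ** W ** S ** R)"
  using assms by (simp add: sym_mat_def matrix_transpose_mul matrix_mul_assoc)

lemma lin_quadform: "linear (\<lambda>A::real^'n^'n. u \<bullet> (A *v v))"
  by (intro linearI) (simp_all add: matrix_vector_mult_add_rdistrib inner_add_right scaleR_matrix_vector_assoc[symmetric])

lemma lin_sandwich: "linear (\<lambda>A::real^'n^'n. P ** A ** Q)"
  by (intro linearI) (simp_all add: matrix_add_ldistrib matrix_add_rdistrib' matrix_scalar_ac scalar_matrix_assoc)

lemma lin_left: "linear (\<lambda>A::real^'n^'n. u \<bullet> ((D ** A) *v v))"
  by (intro linearI) (simp_all add: matrix_add_ldistrib matrix_vector_mult_add_rdistrib inner_add_right
      matrix_scalar_ac scalar_matrix_assoc[symmetric] scaleR_matrix_vector_assoc[symmetric])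


lemma (in prob_space) inner_step:
  fixes f :: "real^'n \<Rightarrow> real" and blk :: "'n \<Rightarrow> 'b::finite"
    and L W :: "real^'n^'n" and Sk :: "'a \<Rightarrow> real^'n^'n"
  assumes smooth: "\<And>u. f u \<le> f y + g \<bullet> (u - y) + 1/2 * ((L *v (u - y)) \<bullet> (u - y))"
    and lower: "\<And>u. f u \<ge> finf"
    and Ls: "sym_mat L" and Lb: "block_diag blk L"
    and Ws: "sym_mat W" and Wb: "block_diag blk W" and Wpd: "\<And>b. block_pd blk b W"
    and gp: "\<And>b. \<gamma> b > 0"
    and Sint: "integrable M Sk" and Smean: "expectation Sk = mat 1"
    and Ssym: "\<And>\<omega>. \<omega> \<in> space M \<Longrightarrow> sym_mat (Sk \<omega>)"
    and Sblk: "\<And>\<omega>. \<omega> \<in> space M \<Longrightarrow> block_diag blk (Sk \<omega>)"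
    and Yint: "integrable M (\<lambda>\<omega>. psd_sqrt (matrix_inv W) ** Sk \<omega> ** W ** L ** W
                                              ** Sk \<omega> ** psd_sqrt (matrix_inv W))"
    and step: "\<And>b. \<gamma> b \<le> inverse (block_lambda_max blk b
         (expectation (\<lambda>\<omega>. psd_sqrt (matrix_inv W) ** Sk \<omega> ** W ** L ** W
                                              ** Sk \<omega> ** psd_sqrt (matrix_inv W))))"
  shows "(\<integral>\<^sup>+ \<omega>. ennreal (f (y - ((block_scal blk \<gamma> ** W) ** Sk \<omega>) *v g) - finf) \<partial>M)
           \<le> ennreal (f y - finf - qnorm_sq (block_scal blk \<gamma> ** W) g / 2)"
    and "0 \<le> f y - finf - qnorm_sq (block_scal blk \<gamma> ** W) g / 2"
proof -
  obtain R R' where R: "psd_sqrt (matrix_inv W) = R" "sym_mat R" "sym_mat R'" "R ** R' = mat 1"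
      "R' ** R = mat 1" "R' ** R' = W" "\<forall>b u. block_vec blk b u \<longrightarrow> block_vec blk b (R' *v u)"
      "\<forall>b u. block_vec blk b u \<longrightarrow> block_vec blk b (R *v u)"
    using W_struct[OF Ws Wb Wpd] by blast
  define G where "G = block_scal blk \<gamma>"
  define D where "D = G ** W"
  define Q where "Q = qnorm_sq D g"
  define Y where "Y \<omega> = R ** Sk \<omega> ** W ** L ** W ** Sk \<omega> ** R" for \<omega>
  define Z where "Z \<omega> = Sk \<omega> ** W ** L ** W ** Sk \<omega>" for \<omega>
  have Yint': "integrable M Y" using Yint unfolding Y_def R(1) .
  have step': "\<And>b. \<gamma> b \<le> inverse (block_lambda_max blk b (expectation Y))"
    using step unfolding Y_def R(1) .
  have RR'': "\<And>A. A ** R ** R' = A" using R(4) by (simp flip: matrix_mul_assoc)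
  have ZY: "Z \<omega> = R' ** Y \<omega> ** R'" for \<omega>
    unfolding Y_def Z_def by (simp add: matrix_mul_assoc R(5) RR'')
  have Zint: "integrable M Z"
    unfolding ZY[abs_def] by (rule lin_integrable[OF lin_sandwich Yint'])
  have EZ: "expectation Z = R' ** expectation Y ** R'"
    unfolding ZY[abs_def] by (rule lin_integral[OF lin_sandwich Yint'])
  have Rd: "block_diag blk R" by (rule preserve_block_diag[OF R(8)])
  have EYs: "sym_mat (expectation Y)"
    by (rule integral_sym[OF Yint']) (simp add: Y_def sym_prod7 R(2) Ssym Ws Ls)
  have EYb: "block_diag blk (expectation Y)"
    by (rule integral_block_diag[OF Yint']) (simp add: Y_def block_diag_mult Rd Sblk Wb Lb)
  define A where "A \<omega> = g \<bullet> ((D ** Sk \<omega>) *v g)" for \<omega>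
  define B where "B \<omega> = (G *v g) \<bullet> (Z \<omega> *v (G *v g))" for \<omega>
  have Aint: "integrable M A" unfolding A_def by (rule lin_integrable[OF lin_left Sint])
  have EA: "expectation A = Q"
    unfolding A_def lin_integral[OF lin_left Sint] Smean Q_def qnorm_sq_def by (simp add: inner_commute)
  have Bint: "integrable M B" unfolding B_def by (rule lin_integrable[OF lin_quadform Zint])
  have EB: "expectation B \<le> Q"
  proof -
    have "expectation B = (G *v g) \<bullet> ((R' ** expectation Y ** R') *v (G *v g))"
      unfolding B_def lin_integral[OF lin_quadform Zint] EZ ..
    also have "\<dots> \<le> (D *v g) \<bullet> g"
      unfolding G_def D_def by (rule quad_bound[OF Wb R(3) R(6) R(7) EYs EYb gp step'])
    finally show ?thesis unfolding Q_def qnorm_sq_def .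
  qed
  define Rf where "Rf \<omega> = f y - finf - A \<omega> + 1/2 * B \<omega>" for \<omega>
  have Rint: "integrable M Rf" unfolding Rf_def using Aint Bint by auto
  have ERf: "expectation Rf = f y - finf - Q + 1/2 * expectation B"
    unfolding Rf_def using Aint Bint prob_space EA by (simp add: integral_diff integral_add)
  have pt: "f (y - (D ** Sk \<omega>) *v g) - finf \<le> Rf \<omega>" if \<omega>: "\<omega> \<in> space M" for \<omega>
  proof -
    let ?z = "(D ** Sk \<omega>) *v g"
    have "f (y - ?z) \<le> f y + g \<bullet> ((y - ?z) - y) + 1/2 * ((L *v ((y - ?z) - y)) \<bullet> ((y - ?z) - y))"
      by (rule smooth)
    also have "\<dots> = f y - g \<bullet> ?z + 1/2 * ((L *v ?z) \<bullet> ?z)"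
    proof -
      have e: "(y - ?z) - y = - ?z" by simp
      have "L *v (- ?z) = - (L *v ?z)" by (rule linear_neg[OF matrix_vector_mul_linear])
      then show ?thesis unfolding e by simp
    qed
    also have "(L *v ?z) \<bullet> ?z = B \<omega>"
      unfolding B_def Z_def D_def G_def by (rule B_ident[OF Ssym[OF \<omega>] Sblk[OF \<omega>] Ws Wb Ls Lb])
    finally show ?thesis unfolding Rf_def A_def by simp
  qed
  have Rnn: "0 \<le> Rf \<omega>" if "\<omega> \<in> space M" for \<omega>
    using pt[OF that] lower[of "y - (D ** Sk _) *v g"] by (meson diff_ge_0_iff_ge order_trans)
  have "(\<integral>\<^sup>+ \<omega>. ennreal (f (y - (D ** Sk \<omega>) *v g) - finf) \<partial>M) \<le> (\<integral>\<^sup>+ \<omega>. ennreal (Rf \<omega>) \<partial>M)"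
    by (rule nn_integral_mono) (simp add: pt ennreal_leI)
  also have "\<dots> = ennreal (expectation Rf)"
    by (rule nn_integral_eq_integral[OF Rint]) (simp add: Rnn)
  also have "\<dots> \<le> ennreal (f y - finf - Q / 2)"
    using EB ERf by (intro ennreal_leI) simp
  finally show "(\<integral>\<^sup>+ \<omega>. ennreal (f (y - ((block_scal blk \<gamma> ** W) ** Sk \<omega>) *v g) - finf) \<partial>M)
           \<le> ennreal (f y - finf - qnorm_sq (block_scal blk \<gamma> ** W) g / 2)"
    unfolding Q_def D_def G_def .
  have "0 \<le> expectation Rf" by (rule integral_nonneg_AE) (simp add: Rnn)
  then show "0 \<le> f y - finf - qnorm_sq (block_scal blk \<gamma> ** W) g / 2"
    using EB ERf unfolding Q_def D_def G_def by simp
qed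

theorem theorem2:
  fixes f :: "real^'n \<Rightarrow> real" and grad :: "real^'n \<Rightarrow> real^'n"
    and finf :: real and blk :: "'n \<Rightarrow> 'b::finite"
    and L W :: "real^'n^'n" and \<gamma> :: "'b \<Rightarrow> real"
    and M :: "'a measure" and S :: "nat \<Rightarrow> 'a \<Rightarrow> real^'n^'n"
    and x0 :: "real^'n" and x :: "nat \<Rightarrow> 'a \<Rightarrow> real^'n" and K :: nat
  assumes blocks_nonempty: "surj blk"
    and grad: "\<And>y. (f has_derivative (\<lambda>h. grad y \<bullet> h)) (at y)"
    and lower: "\<And>y. f y \<ge> finf"
    and smooth: "\<And>u y. f u \<le> f y + grad y \<bullet> (u - y) + 1/2 * ((L *v (u - y)) \<bullet> (u - y))"
    and L_sym: "sym_mat L" and L_blk: "block_diag blk L" and L_pd: "\<And>b. block_pd blk b L"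
    and prob: "prob_space M"
    and S_meas: "\<And>k. S k \<in> borel_measurable M"
    and S_indep: "prob_space.indep_vars M (\<lambda>_. borel) S UNIV"
    and S_ident: "\<And>k. distr M borel (S k) = distr M borel (S 0)"
    and S_sym: "\<And>k \<omega>. \<omega> \<in> space M \<Longrightarrow> sym_mat (S k \<omega>)"
    and S_blk: "\<And>k \<omega>. \<omega> \<in> space M \<Longrightarrow> block_diag blk (S k \<omega>)"
    and S_psd: "\<And>k b \<omega>. \<omega> \<in> space M \<Longrightarrow> block_psd blk b (S k \<omega>)"
    and S_int: "\<And>k. integrable M (S k)"
    and S_mean: "\<And>k. prob_space.expectation M (S k) = mat 1"
    and W_sym: "sym_mat W" and W_blk: "block_diag blk W" and W_pd: "\<And>b. block_pd blk b W"
    and gamma_pos: "\<And>b. \<gamma> b > 0"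
    and SWLWS_int: "\<And>k. integrable M (\<lambda>\<omega>. psd_sqrt (matrix_inv W) ** S k \<omega> ** W ** L ** W
                                              ** S k \<omega> ** psd_sqrt (matrix_inv W))"
    and stepsize: "\<And>k b. \<gamma> b \<le> inverse (block_lambda_max blk b
         (prob_space.expectation M (\<lambda>\<omega>. psd_sqrt (matrix_inv W) ** S k \<omega> ** W ** L ** W
                                              ** S k \<omega> ** psd_sqrt (matrix_inv W))))"
    and x_0: "\<And>\<omega>. x 0 \<omega> = x0"
    and x_Suc: "\<And>k \<omega>. x (Suc k) \<omega> = x k \<omega> - ((block_scal blk \<gamma> ** W) ** S k \<omega>) *v grad (x k \<omega>)"
    and f_int: "\<And>k. integrable M (\<lambda>\<omega>. f (x k \<omega>))"
    and norm_int: "\<And>k. integrable M (\<lambda>\<omega>. qnorm_sq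
         ((1 / det (block_scal blk \<gamma> ** W) powr (1 / real CARD('n))) *\<^sub>R (block_scal blk \<gamma> ** W))
         (grad (x k \<omega>)))"
    and K: "K \<ge> 1"
  shows "1 / real K * (\<Sum>k<K. prob_space.expectation M (\<lambda>\<omega>. qnorm_sq
         ((1 / det (block_scal blk \<gamma> ** W) powr (1 / real CARD('n))) *\<^sub>R (block_scal blk \<gamma> ** W))
         (grad (x k \<omega>))))
       \<le> 2 * (f x0 - finf) / (det (block_scal blk \<gamma> ** W) powr (1 / real CARD('n)) * real K)"
proof -
  interpret prob_space M by (rule prob)
  note fg = f_grad_measurable[OF grad]
  have fm: "f \<in> borel_measurable borel" by (rule fg(1))
  have gm: "grad \<in> borel_measurable borel" by (rule fg(2))
  define D where "D = block_scal blk \<gamma> ** W"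
  define c where "c = det (block_scal blk \<gamma> ** W) powr (1 / real CARD('n))"
  define Qf where "Qf y = qnorm_sq D (grad y)" for y
  define F where "F y = f y - finf" for y
  have Fnn: "F y \<ge> 0" for y using lower[of y] unfolding F_def by simp
  have xrec_eq: "x k \<omega> = xrec D grad x0 k (\<lambda>i. S i \<omega>)" for k \<omega>
    by (induction k) (simp_all add: x_0 x_Suc D_def)
  have Qnn: "Qf y \<ge> 0" for y
    unfolding Qf_def qnorm_sq_def D_def by (rule qf_nonneg[OF W_blk W_pd gamma_pos])
  have Fint: "integrable M (\<lambda>\<omega>. F (x k \<omega>))" for k
    unfolding F_def using f_int[of k] by simp
  have stepk: "integrable M (\<lambda>\<omega>. Qf (x k \<omega>)) \<and>
      expectation (\<lambda>\<omega>. F (x (Suc k) \<omega>)) \<le> expectation (\<lambda>\<omega>. F (x k \<omega>)) - expectation (\<lambda>\<omega>. Qf (x k \<omega>)) / 2"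
    for k
  proof -
    define X1 where "X1 \<omega> = (x k \<omega>, 0::real^'n^'n)" for \<omega>
    define X2 where "X2 \<omega> = (0::real^'n, S k \<omega>)" for \<omega>
    have ind: "indep_var borel X1 borel X2"
      unfolding X1_def X2_def xrec_eq[abs_def] by (rule indep_x_S[OF S_indep gm])
    then have rv1: "X1 \<in> borel_measurable M" and rv2: "X2 \<in> borel_measurable M"
      and prod: "distr M borel X1 \<Otimes>\<^sub>M distr M borel X2 = distr M (borel \<Otimes>\<^sub>M borel) (\<lambda>\<omega>. (X1 \<omega>, X2 \<omega>))"
      unfolding indep_var_distribution_eq by auto
    have xkm: "x k \<in> borel_measurable M"
    proof -
      have "fst \<in> borel_measurable (borel :: ((real^'n) \<times> (real^'n^'n)) measure)"
        by (intro borel_measurable_continuous_onI continuous_intros)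
      from measurable_compose[OF rv1 this] show ?thesis by (simp add: X1_def comp_def)
    qed
    have fstm: "(\<lambda>p::(real^'n) \<times> (real^'n^'n). fst p) \<in> borel_measurable borel"
      by (intro borel_measurable_continuous_onI continuous_intros)
    have sndm: "(\<lambda>p::(real^'n) \<times> (real^'n^'n). snd p) \<in> borel_measurable borel"
      by (intro borel_measurable_continuous_onI continuous_intros)
    define H where "H p = ennreal (F (fst (fst p) - (D ** snd (snd p)) *v grad (fst (fst p))))"
      for p :: "((real^'n) \<times> (real^'n^'n)) \<times> ((real^'n) \<times> (real^'n^'n))"
    have Hm: "H \<in> borel_measurable (borel \<Otimes>\<^sub>M borel)"
    proof -
      have a: "(\<lambda>p::((real^'n) \<times> (real^'n^'n)) \<times> ((real^'n) \<times> (real^'n^'n)). fst (fst p)) \<in> borel_measurable (borel \<Otimes>\<^sub>M borel)"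
        by (rule measurable_compose[OF measurable_fst fstm])
      have b: "(\<lambda>p::((real^'n) \<times> (real^'n^'n)) \<times> ((real^'n) \<times> (real^'n^'n)). snd (snd p)) \<in> borel_measurable (borel \<Otimes>\<^sub>M borel)"
        by (rule measurable_compose[OF measurable_snd sndm])
      have c1: "(\<lambda>p::((real^'n) \<times> (real^'n^'n)) \<times> ((real^'n) \<times> (real^'n^'n)). D ** snd (snd p)) \<in> borel_measurable (borel \<Otimes>\<^sub>M borel)"
        by (rule mmm_measurable[OF measurable_const b]) simp
      have c2: "(\<lambda>p::((real^'n) \<times> (real^'n^'n)) \<times> ((real^'n) \<times> (real^'n^'n)). grad (fst (fst p))) \<in> borel_measurable (borel \<Otimes>\<^sub>M borel)"
        using measurable_compose[OF a gm] .
      have c3: "(\<lambda>p::((real^'n) \<times> (real^'n^'n)) \<times> ((real^'n) \<times> (real^'n^'n)). fst (fst p) - (D ** snd (snd p)) *v grad (fst (fst p))) \<in> borel_measurable (borel \<Otimes>\<^sub>M borel)"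
        using borel_measurable_diff[OF a mvm_measurable[OF c1 c2]] .
      have "(\<lambda>p::((real^'n) \<times> (real^'n^'n)) \<times> ((real^'n) \<times> (real^'n^'n)). f (fst (fst p) - (D ** snd (snd p)) *v grad (fst (fst p)))) \<in> borel_measurable (borel \<Otimes>\<^sub>M borel)"
        using measurable_compose[OF c3 fm] .
      then show ?thesis unfolding H_def[abs_def] F_def by measurable
    qed
    interpret P2: prob_space "distr M borel X2" by (rule prob_space_distr[OF rv2])
    have sf2: "sigma_finite_measure (distr M borel X2)" by (rule prob_space_imp_sigma_finite) unfold_locales
    have pm: "(\<lambda>\<omega>. (X1 \<omega>, X2 \<omega>)) \<in> measurable M (borel \<Otimes>\<^sub>M borel)" by (rule measurable_Pair[OF rv1 rv2])
    have inner: "(\<integral>\<^sup>+ q. H (p, q) \<partial>distr M borel X2) \<le> ennreal (F (fst p) - Qf (fst p) / 2)"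
      and innernn: "0 \<le> F (fst p) - Qf (fst p) / 2" for p
    proof -
      have qm: "(\<lambda>q. H (p, q)) \<in> borel_measurable borel"
      proof -
        have "(\<lambda>q::(real^'n) \<times> (real^'n^'n). (p, q)) \<in> measurable borel (borel \<Otimes>\<^sub>M borel)"
          by (rule measurable_Pair[OF measurable_const measurable_ident_sets]) auto
        from measurable_compose[OF this Hm] show ?thesis .
      qed
      have "(\<integral>\<^sup>+ q. H (p, q) \<partial>distr M borel X2) = (\<integral>\<^sup>+ \<omega>. H (p, X2 \<omega>) \<partial>M)"
        by (rule nn_integral_distr[OF rv2]) (simp add: qm)
      also have "\<dots> = (\<integral>\<^sup>+ \<omega>. ennreal (f (fst p - ((block_scal blk \<gamma> ** W) ** S k \<omega>) *v grad (fst p)) - finf) \<partial>M)"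
        unfolding H_def X2_def F_def D_def by simp
      also have "\<dots> \<le> ennreal (f (fst p) - finf - qnorm_sq (block_scal blk \<gamma> ** W) (grad (fst p)) / 2)"
        by (rule inner_step(1)[OF smooth lower L_sym L_blk W_sym W_blk W_pd gamma_pos S_int S_mean S_sym S_blk SWLWS_int stepsize])
      finally show "(\<integral>\<^sup>+ q. H (p, q) \<partial>distr M borel X2) \<le> ennreal (F (fst p) - Qf (fst p) / 2)"
        unfolding F_def Qf_def D_def by simp
      have "0 \<le> f (fst p) - finf - qnorm_sq (block_scal blk \<gamma> ** W) (grad (fst p)) / 2"
        by (rule inner_step(2)[OF smooth lower L_sym L_blk W_sym W_blk W_pd gamma_pos S_int S_mean S_sym S_blk SWLWS_int stepsize])
      then show "0 \<le> F (fst p) - Qf (fst p) / 2" unfolding F_def Qf_def D_def by simp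
    qed
    have Qm: "(\<lambda>\<omega>. Qf (x k \<omega>)) \<in> borel_measurable M"
      unfolding Qf_def qnorm_sq_def
      using mvm_measurable[OF measurable_const measurable_compose[OF xkm gm], of D] measurable_compose[OF xkm gm]
      by (intro borel_measurable_inner) auto
    have Qint: "integrable M (\<lambda>\<omega>. Qf (x k \<omega>))"
    proof (rule Bochner_Integration.integrable_bound[OF _ Qm])
      show "integrable M (\<lambda>\<omega>. 2 * F (x k \<omega>))" using Fint[of k] by simp
      show "AE \<omega> in M. norm (Qf (x k \<omega>)) \<le> norm (2 * F (x k \<omega>))"
      proof (rule AE_I2)
        fix \<omega>
        have "0 \<le> F (x k \<omega>) - Qf (x k \<omega>) / 2" using innernn[of "(x k \<omega>, 0)"] by simp
        then show "norm (Qf (x k \<omega>)) \<le> norm (2 * F (x k \<omega>))" using Qnn[of "x k \<omega>"] Fnn[of "x k \<omega>"] by simp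
      qed
    qed
    define Gk where "Gk \<omega> = F (x k \<omega>) - Qf (x k \<omega>) / 2" for \<omega>
    have Gint: "integrable M Gk" unfolding Gk_def using Fint[of k] Qint by auto
    have Gnn: "0 \<le> Gk \<omega>" for \<omega> using innernn[of "(x k \<omega>, 0)"] unfolding Gk_def by simp
    have "ennreal (expectation (\<lambda>\<omega>. F (x (Suc k) \<omega>))) = (\<integral>\<^sup>+ \<omega>. ennreal (F (x (Suc k) \<omega>)) \<partial>M)"
      by (rule nn_integral_eq_integral[OF Fint, symmetric]) (simp add: Fnn)
    also have "\<dots> = (\<integral>\<^sup>+ \<omega>. H (X1 \<omega>, X2 \<omega>) \<partial>M)"
      unfolding H_def X1_def X2_def by (simp add: x_Suc D_def)
    also have "\<dots> = (\<integral>\<^sup>+ z. H z \<partial>distr M (borel \<Otimes>\<^sub>M borel) (\<lambda>\<omega>. (X1 \<omega>, X2 \<omega>)))"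
      by (rule nn_integral_distr[OF pm, symmetric]) (simp add: Hm)
    also have "\<dots> = (\<integral>\<^sup>+ z. H z \<partial>(distr M borel X1 \<Otimes>\<^sub>M distr M borel X2))"
      by (simp only: prod)
    also have "\<dots> = (\<integral>\<^sup>+ p. \<integral>\<^sup>+ q. H (p, q) \<partial>distr M borel X2 \<partial>distr M borel X1)"
      by (rule sigma_finite_measure.nn_integral_fst[OF sf2, symmetric]) (use Hm in \<open>simp add: prod\<close>)
    also have "\<dots> \<le> (\<integral>\<^sup>+ p. ennreal (F (fst p) - Qf (fst p) / 2) \<partial>distr M borel X1)"
      by (rule nn_integral_mono) (rule inner)
    also have "\<dots> = (\<integral>\<^sup>+ \<omega>. ennreal (F (fst (X1 \<omega>)) - Qf (fst (X1 \<omega>)) / 2) \<partial>M)"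
    proof (rule nn_integral_distr[OF rv1])
      have "(\<lambda>p. F (fst p) - Qf (fst p) / 2) \<in> borel_measurable (borel :: ((real^'n) \<times> (real^'n^'n)) measure)"
        unfolding F_def Qf_def qnorm_sq_def
        using measurable_compose[OF fstm fm] measurable_compose[OF fstm gm]
          mvm_measurable[OF measurable_const measurable_compose[OF fstm gm], of D]
        by measurable
      then show "(\<lambda>p. ennreal (F (fst p) - Qf (fst p) / 2)) \<in> borel_measurable (distr M borel X1)"
        by simp
    qed
    also have "\<dots> = (\<integral>\<^sup>+ \<omega>. ennreal (Gk \<omega>) \<partial>M)" unfolding Gk_def X1_def by simp
    also have "\<dots> = ennreal (expectation Gk)"
      by (rule nn_integral_eq_integral[OF Gint]) (simp add: Gnn)
    finally have "expectation (\<lambda>\<omega>. F (x (Suc k) \<omega>)) \<le> expectation Gk"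
      using integral_nonneg_AE[of Gk M] Gnn by (simp add: ennreal_le_iff)
    also have "expectation Gk = expectation (\<lambda>\<omega>. F (x k \<omega>)) - expectation (\<lambda>\<omega>. Qf (x k \<omega>)) / 2"
      unfolding Gk_def using Fint[of k] Qint by simp
    finally show ?thesis using Qint by simp
  qed
  have tele: "(\<Sum>k<K'. expectation (\<lambda>\<omega>. Qf (x k \<omega>))) \<le>
      2 * (expectation (\<lambda>\<omega>. F (x 0 \<omega>)) - expectation (\<lambda>\<omega>. F (x K' \<omega>)))" for K'
  proof (induction K')
    case 0 then show ?case by simp
  next
    case (Suc K')
    then show ?case using stepk[of K'] by simp
  qed
  have E0: "expectation (\<lambda>\<omega>. F (x 0 \<omega>)) = f x0 - finf" unfolding F_def x_0 by (simp add: prob_space)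
  have EK: "expectation (\<lambda>\<omega>. F (x K \<omega>)) \<ge> 0" by (rule integral_nonneg_AE) (simp add: Fnn)
  have core: "(\<Sum>k<K. expectation (\<lambda>\<omega>. Qf (x k \<omega>))) \<le> 2 * (f x0 - finf)"
    using tele[of K] E0 EK by simp
  have qs: "qnorm_sq ((1 / c) *\<^sub>R D) v = (1 / c) * qnorm_sq D v" for v
    unfolding qnorm_sq_def by (simp flip: scaleR_matrix_vector_assoc)
  have lhs: "1 / real K * (\<Sum>k<K. expectation (\<lambda>\<omega>. qnorm_sq ((1 / c) *\<^sub>R D) (grad (x k \<omega>))))
      = (1 / c) * (1 / real K) * (\<Sum>k<K. expectation (\<lambda>\<omega>. Qf (x k \<omega>)))"
    unfolding qs Qf_def by (simp add: sum_distrib_left ac_simps)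
  have c0: "c \<ge> 0" unfolding c_def by simp
  have Kpos: "real K > 0" using K by simp
  have "(1 / c) * (1 / real K) * (\<Sum>k<K. expectation (\<lambda>\<omega>. Qf (x k \<omega>))) \<le> 2 * (f x0 - finf) / (c * real K)"
  proof (cases "c = 0")
    case True then show ?thesis by simp
  next
    case False
    then have cp: "c > 0" using c0 by simp
    have "(1 / c) * (1 / real K) * (\<Sum>k<K. expectation (\<lambda>\<omega>. Qf (x k \<omega>))) \<le> (1 / c) * (1 / real K) * (2 * (f x0 - finf))"
      using core cp Kpos by (intro mult_left_mono) auto
    also have "\<dots> = 2 * (f x0 - finf) / (c * real K)" by (simp add: field_simps)
    finally show ?thesis .
  qed
  then show ?thesis using lhs unfolding c_def D_def by simp
qed

end
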